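(* Let $f$ satisfy the standing assumptions below. For $t>0$ and $\xi,v\in(0,1)$ set $$\Phi_0(\xi,v)=\frac{1}{2\sqrt2}\int_{-1}^{1}\frac{H'\!\left(\frac{1+\mu}{2}\xi+\frac{1-\mu}{2}v\right)}{\sqrt{1-\mu}}\,d\mu,\qquad H'(u)=-60tu-f'(u).$$ Let $\delta>0$ be such that $\frac{\partial^2}{\partial\xi^2}F_0(\xi,u_1)<0$ for all $0<\xi<1$, $1-\delta<u_1<1$, where $F_0(\xi,u_1)=\frac{1}{2\sqrt2}\int_{-1}^{1}f'(\frac{1+\mu}{2}\xi+\frac{1-\mu}{2}u_1)(1-\mu)^{-1/2}d\mu$, and let $\delta_2>0$ be such that $f''(u)>0$ for $0<u<\delta_2$. Then there exists a constant $T^+>0$ such that for $t>T^+$ the system $$\Phi_0(u_1,u_3)=0,\qquad \int_{u_3}^{u_1}\Phi_0(\xi,u_3)\sqrt{\xi-u_3}\,d\xi=0,\qquad x-30tu_3^2-f(u_3)=0$$ in the unknowns $u_1,u_3\in(0,1)$, $x\in\mathbb{R}$ has a unique solution $u_1^+(t)$, $u_3^+(t)$, $x^+(t)$. The functions $u_1^+(t)$ and $u_3^+(t)$ are increasing and decreasing functions of $t$, respectively, with $$\lim_{t\to+\infty}u_1^+(t)=1,\qquad\lim_{t\to+\infty}u_3^+(t)=0 .$$ Furthermore, $1-\delta<u_1^+(t)<1$ and $0<u_3^+(t)<\delta_2$ for $t>T^+$.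
   Context: Standing assumptions: $f:(0,1)\to\mathbb{R}$ is the inverse of a smooth strictly decreasing function $u_0:\mathbb{R}\to(0,1)$ with $u_0(-\infty)=1$, $u_0(+\infty)=0$; thus $f$ is smooth with $f'<0$, $\lim_{u\to0}f(u)=+\infty$, $\lim_{u\to1}f(u)=-\infty$; moreover $f'''(u)<0$ for $u$ in a neighborhood of $0$ and in a neighborhood of $1$. (Under these assumptions constants $\delta,\delta_2>0$ with the stated properties exist.) *)

theory Defs
  imports "HOL-Analysis.Analysis"
begin

definition smooth_real_on :: "real set \<Rightarrow> (real \<Rightarrow> real) \<Rightarrow> bool" where
  "smooth_real_on S g \<longleftrightarrow> (\<forall>n. \<forall>x\<in>S. (deriv ^^ n) g differentiable (at x))"

definition Hp :: "(real \<Rightarrow> real) \<Rightarrow> real \<Rightarrow> real \<Rightarrow> real" where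
  "Hp f t u = - 60 * t * u - deriv f u"

definition Phi0 :: "(real \<Rightarrow> real) \<Rightarrow> real \<Rightarrow> real \<Rightarrow> real \<Rightarrow> real" where
  "Phi0 f t xi v = 1 / (2 * sqrt 2) *
     integral {-1..1} (\<lambda>mu. Hp f t ((1 + mu) / 2 * xi + (1 - mu) / 2 * v) / sqrt (1 - mu))"

definition F0 :: "(real \<Rightarrow> real) \<Rightarrow> real \<Rightarrow> real \<Rightarrow> real" where
  "F0 f xi u1 = 1 / (2 * sqrt 2) *
     integral {-1..1} (\<lambda>mu. deriv f ((1 + mu) / 2 * xi + (1 - mu) / 2 * u1) / sqrt (1 - mu))"

definition solves_system :: "(real \<Rightarrow> real) \<Rightarrow> real \<Rightarrow> real \<Rightarrow> real \<Rightarrow> real \<Rightarrow> bool" where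
  "solves_system f t u1 u3 x \<longleftrightarrow>
     0 < u3 \<and> u3 < u1 \<and> u1 < 1 \<and>
     Phi0 f t u1 u3 = 0 \<and>
     integral {u3..u1} (\<lambda>xi. Phi0 f t xi u3 * sqrt (xi - u3)) = 0 \<and>
     x - 30 * t * u3\<^sup>2 - f u3 = 0"

end

theory Submission
  imports Defs
begin

definition ps :: "real \<Rightarrow> real \<Rightarrow> real \<Rightarrow> real" where
  "ps x v s = x - s\<^sup>2 * (x - v)"

lemma ps_in:
  assumes "0 < x" "x < 1" "0 < v" "v < 1" "0 \<le> s" "s \<le> 1"
  shows "0 < ps x v s" "ps x v s < 1"
proof -
  have s2: "0 \<le> s\<^sup>2" "s\<^sup>2 \<le> 1" using assms by (auto simp: power_le_one)
  have e: "ps x v s = (1 - s\<^sup>2) * x + s\<^sup>2 * v" by (simp add: ps_def algebra_simps)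
  have "0 < (1 - s\<^sup>2) * x + s\<^sup>2 * v"
  proof (cases "s\<^sup>2 = 1")
    case True then show ?thesis using assms by simp
  next
    case False
    then have "0 < 1 - s\<^sup>2" using s2 by simp
    then have "0 < (1 - s\<^sup>2) * x" using assms by simp
    moreover have "0 \<le> s\<^sup>2 * v" using s2 assms by simp
    ultimately show ?thesis by linarith
  qed
  then show "0 < ps x v s" using e by simp
  have "(1 - s\<^sup>2) * x + s\<^sup>2 * v < 1"
  proof (cases "s\<^sup>2 = 1")
    case True then show ?thesis using assms by simp
  next
    case False
    then have "0 < 1 - s\<^sup>2" using s2 by simp
    then have "(1 - s\<^sup>2) * x < (1 - s\<^sup>2)" using assms by simp
    moreover have "s\<^sup>2 * v \<le> s\<^sup>2" using s2 assms by (simp add: mult_left_le)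
    ultimately show ?thesis by linarith
  qed
  then show "ps x v s < 1" using e by simp
qed

lemma ps_between:
  assumes "v \<le> x" "0 \<le> s" "s \<le> 1"
  shows "v \<le> ps x v s" "ps x v s \<le> x"
proof -
  have s2: "0 \<le> s\<^sup>2" "s\<^sup>2 \<le> 1" using assms by (auto simp: power_le_one)
  have "s\<^sup>2 * (x - v) \<le> 1 * (x - v)" using s2 assms by (intro mult_right_mono) auto
  then show "v \<le> ps x v s" by (simp add: ps_def)
  show "ps x v s \<le> x" using s2 assms by (simp add: ps_def)
qed

lemma ps_0 [simp]: "ps x v 0 = x" and ps_1 [simp]: "ps x v 1 = v"
  by (simp_all add: ps_def)

lemma ps_has_der_s: "((\<lambda>s. ps x v s) has_real_derivative (- 2 * s * (x - v))) (at s within S)"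
  unfolding ps_def by (auto intro!: derivative_eq_intros)

lemma ps_has_der_x: "((\<lambda>x. ps x v s) has_real_derivative (1 - s\<^sup>2)) (at x within S)"
  unfolding ps_def by (auto intro!: derivative_eq_intros)

lemma ps_has_der_v: "((\<lambda>v. ps x v s) has_real_derivative s\<^sup>2) (at v within S)"
  unfolding ps_def by (auto intro!: derivative_eq_intros)

lemma continuous_on_ps [continuous_intros]:
  assumes "continuous_on S X" "continuous_on S V" "continuous_on S Sv"
  shows "continuous_on S (\<lambda>z. ps (X z) (V z) (Sv z))"
  unfolding ps_def by (intro continuous_intros assms)

lemma cont_ps_x:
  fixes q wgt :: "real \<Rightarrow> real"
  assumes q: "continuous_on {0<..<1} q" and v: "0 < v" "v < 1" and w: "continuous_on {0..1} wgt"
  shows "continuous_on ({0<..<1} \<times> {0..1}) (\<lambda>(x, s). wgt s * q (ps x v s))"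
proof -
  have 1: "continuous_on ({0<..<1} \<times> {0..1}) (\<lambda>z. q (ps (fst z) v (snd z)))"
    by (rule continuous_on_compose2[OF q]) (auto intro!: continuous_intros ps_in v)
  have 2: "continuous_on ({0<..<1} \<times> {0..1::real}) (\<lambda>z::real\<times>real. wgt (snd z))"
    by (rule continuous_on_compose2[OF w]) (auto intro!: continuous_intros)
  show ?thesis using continuous_on_mult[OF 2 1] by (simp add: case_prod_beta)
qed

lemma cont_ps_v:
  fixes q wgt :: "real \<Rightarrow> real"
  assumes q: "continuous_on {0<..<1} q" and x: "0 < x" "x < 1" and w: "continuous_on {0..1} wgt"
  shows "continuous_on ({0<..<1} \<times> {0..1}) (\<lambda>(v, s). wgt s * q (ps x v s))"
proof -
  have 1: "continuous_on ({0<..<1} \<times> {0..1}) (\<lambda>z. q (ps x (fst z) (snd z)))"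
    by (rule continuous_on_compose2[OF q]) (auto intro!: continuous_intros ps_in x)
  have 2: "continuous_on ({0<..<1} \<times> {0..1::real}) (\<lambda>z::real\<times>real. wgt (snd z))"
    by (rule continuous_on_compose2[OF w]) (auto intro!: continuous_intros)
  show ?thesis using continuous_on_mult[OF 2 1] by (simp add: case_prod_beta)
qed

lemma cont_ps_xv:
  fixes q wgt :: "real \<Rightarrow> real"
  assumes q: "continuous_on {0<..<1} q" and w: "continuous_on {0..1} wgt"
  shows "continuous_on (({0<..<1} \<times> {0<..<1}) \<times> {0..1}) (\<lambda>(z, s). wgt s * q (ps (fst z) (snd z) s))"
proof -
  have 1: "continuous_on (({0<..<1} \<times> {0<..<1}) \<times> {0..1})
      (\<lambda>z. q (ps (fst (fst z)) (snd (fst z)) (snd z)))"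
    by (rule continuous_on_compose2[OF q]) (auto intro!: continuous_intros ps_in)
  have 2: "continuous_on (({0<..<1} \<times> {0<..<1}) \<times> {0..1::real}) (\<lambda>z::(real\<times>real)\<times>real. wgt (snd z))"
    by (rule continuous_on_compose2[OF w]) (auto intro!: continuous_intros)
  show ?thesis using continuous_on_mult[OF 2 1] by (simp add: case_prod_beta)
qed

lemma cont_ps_s:
  fixes q wgt :: "real \<Rightarrow> real"
  assumes q: "continuous_on {0<..<1} q" and w: "continuous_on {0..1} wgt"
    and "0 < x" "x < 1" "0 < v" "v < 1"
  shows "continuous_on {0..1} (\<lambda>s. wgt s * q (ps x v s))"
proof -
  have "continuous_on {0..1} (\<lambda>s. q (ps x v s))"
    by (rule continuous_on_compose2[OF q]) (auto intro!: continuous_intros ps_in assms)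
  then show ?thesis by (rule continuous_on_mult[OF w])
qed

lemma leib_x:
  fixes q wgt :: "real \<Rightarrow> real"
  assumes q: "continuous_on {0<..<1} q" and q': "continuous_on {0<..<1} q'"
    and der: "\<And>y. 0 < y \<Longrightarrow> y < 1 \<Longrightarrow> (q has_real_derivative q' y) (at y)"
    and w: "continuous_on {0..1} wgt"
    and x: "0 < x" "x < 1" and v: "0 < v" "v < 1"
  shows "((\<lambda>x. integral {0..1} (\<lambda>s. wgt s * q (ps x v s))) has_real_derivative
          integral {0..1} (\<lambda>s. (wgt s * (1 - s\<^sup>2)) * q' (ps x v s))) (at x)"
proof -
  have w2: "continuous_on {0..1} (\<lambda>s::real. wgt s * (1 - s\<^sup>2))" using w by (intro continuous_intros)
  have "((\<lambda>x. integral (cbox 0 1) (\<lambda>s. wgt s * q (ps x v s))) has_real_derivative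
          integral (cbox 0 1) (\<lambda>s. (wgt s * (1 - s\<^sup>2)) * q' (ps x v s))) (at x within {0<..<1})"
  proof (rule leibniz_rule_field_derivative)
    fix y s :: real assume y: "y \<in> {0<..<1}" and s: "s \<in> cbox 0 1"
    have p: "0 < ps y v s" "ps y v s < 1" using y s v ps_in[of y v s] by auto
    have "((\<lambda>y. q (ps y v s)) has_real_derivative q' (ps y v s) * (1 - s\<^sup>2)) (at y within {0<..<1})"
      by (rule DERIV_chain2[OF der[OF p] ps_has_der_x])
    from DERIV_cmult[OF this, of "wgt s"]
    show "((\<lambda>y. wgt s * q (ps y v s)) has_real_derivative (wgt s * (1 - s\<^sup>2)) * q' (ps y v s)) (at y within {0<..<1})"
      by (simp add: ac_simps)
  next
    fix y :: real assume y: "y \<in> {0<..<1}"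
    show "(\<lambda>s. wgt s * q (ps y v s)) integrable_on cbox 0 1"
      unfolding cbox_interval using y v by (intro integrable_continuous_real cont_ps_s[OF q w]) auto
  next
    show "continuous_on ({0<..<1} \<times> cbox 0 1) (\<lambda>(x, s). (wgt s * (1 - s\<^sup>2)) * q' (ps x v s))"
      unfolding cbox_interval by (rule cont_ps_x[OF q' v w2])
  qed (use x in \<open>auto simp: convex_real_interval\<close>)
  moreover have "at x within {0<..<1} = at x" using x by (intro at_within_open) auto
  ultimately show ?thesis by (simp only: cbox_interval)
qed

lemma leib_v:
  fixes q wgt :: "real \<Rightarrow> real"
  assumes q: "continuous_on {0<..<1} q" and q': "continuous_on {0<..<1} q'"
    and der: "\<And>y. 0 < y \<Longrightarrow> y < 1 \<Longrightarrow> (q has_real_derivative q' y) (at y)"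
    and w: "continuous_on {0..1} wgt"
    and x: "0 < x" "x < 1" and v: "0 < v" "v < 1"
  shows "((\<lambda>v. integral {0..1} (\<lambda>s. wgt s * q (ps x v s))) has_real_derivative
          integral {0..1} (\<lambda>s. (wgt s * s\<^sup>2) * q' (ps x v s))) (at v)"
proof -
  have w2: "continuous_on {0..1} (\<lambda>s::real. wgt s * s\<^sup>2)" using w by (intro continuous_intros)
  have "((\<lambda>v. integral (cbox 0 1) (\<lambda>s. wgt s * q (ps x v s))) has_real_derivative
          integral (cbox 0 1) (\<lambda>s. (wgt s * s\<^sup>2) * q' (ps x v s))) (at v within {0<..<1})"
  proof (rule leibniz_rule_field_derivative)
    fix y s :: real assume y: "y \<in> {0<..<1}" and s: "s \<in> cbox 0 1"
    have p: "0 < ps x y s" "ps x y s < 1" using y s x ps_in[of x y s] by auto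
    have "((\<lambda>y. q (ps x y s)) has_real_derivative q' (ps x y s) * s\<^sup>2) (at y within {0<..<1})"
      by (rule DERIV_chain2[OF der[OF p] ps_has_der_v])
    from DERIV_cmult[OF this, of "wgt s"]
    show "((\<lambda>y. wgt s * q (ps x y s)) has_real_derivative (wgt s * s\<^sup>2) * q' (ps x y s)) (at y within {0<..<1})"
      by (simp add: ac_simps)
  next
    fix y :: real assume y: "y \<in> {0<..<1}"
    show "(\<lambda>s. wgt s * q (ps x y s)) integrable_on cbox 0 1"
      unfolding cbox_interval using y x by (intro integrable_continuous_real cont_ps_s[OF q w]) auto
  next
    show "continuous_on ({0<..<1} \<times> cbox 0 1) (\<lambda>(v, s). (wgt s * s\<^sup>2) * q' (ps x v s))"
      unfolding cbox_interval by (rule cont_ps_v[OF q' x w2])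
  qed (use v in \<open>auto simp: convex_real_interval\<close>)
  moreover have "at v within {0<..<1} = at v" using v by (intro at_within_open) auto
  ultimately show ?thesis by (simp only: cbox_interval)
qed


definition W :: "(real \<Rightarrow> real) \<Rightarrow> (real \<Rightarrow> real) \<Rightarrow> real \<Rightarrow> real \<Rightarrow> real" where
  "W wgt q x v = integral {0..1} (\<lambda>s. wgt s * q (ps x v s))"

lemma W_integrable:
  fixes q wgt :: "real \<Rightarrow> real"
  assumes "continuous_on {0<..<1} q" "continuous_on {0..1} wgt"
    "0 < x" "x < 1" "0 < v" "v < 1"
  shows "(\<lambda>s. wgt s * q (ps x v s)) integrable_on {0..1}"
  by (intro integrable_continuous_real cont_ps_s assms)

lemma W_add:
  fixes q w1 w2 :: "real \<Rightarrow> real"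
  assumes "continuous_on {0<..<1} q" "continuous_on {0..1} w1" "continuous_on {0..1} w2"
    "0 < x" "x < 1" "0 < v" "v < 1"
  shows "W (\<lambda>s. w1 s + w2 s) q x v = W w1 q x v + W w2 q x v"
proof -
  have "W (\<lambda>s. w1 s + w2 s) q x v = integral {0..1} (\<lambda>s. w1 s * q (ps x v s) + w2 s * q (ps x v s))"
    unfolding W_def by (simp add: distrib_right)
  also have "\<dots> = W w1 q x v + W w2 q x v"
    unfolding W_def by (rule integral_add; rule W_integrable; fact)
  finally show ?thesis .
qed

lemma W_cmult:
  fixes q w :: "real \<Rightarrow> real"
  shows "W (\<lambda>s. c * w s) q x v = c * W w q x v"
  unfolding W_def by (simp add: mult.assoc)

lemma W_cong:
  assumes "\<And>s. 0 \<le> s \<Longrightarrow> s \<le> 1 \<Longrightarrow> w1 s = w2 s"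
  shows "W w1 q x v = W w2 q x v"
  unfolding W_def by (rule integral_cong) (use assms in auto)

lemma W_const: "W (\<lambda>s. 1) q x x = q x"
  unfolding W_def ps_def by simp

lemma BP_has_integral:
  fixes q q' phi phi' :: "real \<Rightarrow> real"
  assumes qd: "\<And>y. 0 < y \<Longrightarrow> y < 1 \<Longrightarrow> (q has_real_derivative q' y) (at y)"
    and phid: "\<And>s. (phi has_real_derivative phi' s) (at s)"
    and x: "0 < x" "x < 1" and v: "0 < v" "v < 1" and ab: "0 \<le> a" "a \<le> b" "b \<le> 1"
  shows "((\<lambda>s. phi' s * q (ps x v s) - 2 * (x - v) * (phi s * s) * q' (ps x v s)) has_integral
           (phi b * q (ps x v b) - phi a * q (ps x v a))) {a..b}"
proof -
  have "((\<lambda>s. phi s * q (ps x v s)) has_real_derivative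
          (phi' s * q (ps x v s) - 2 * (x - v) * (phi s * s) * q' (ps x v s))) (at s within {a..b})"
    if s: "s \<in> {a..b}" for s
  proof -
    have p: "0 < ps x v s" "ps x v s < 1" using s ab x v ps_in[of x v s] by auto
    have d1: "((\<lambda>s. q (ps x v s)) has_real_derivative q' (ps x v s) * (- 2 * s * (x - v))) (at s within {a..b})"
      by (rule DERIV_chain2[OF qd[OF p] ps_has_der_s])
    have d2: "(phi has_real_derivative phi' s) (at s within {a..b})"
      using phid has_field_derivative_at_within by blast
    from DERIV_mult[OF d2 d1] show ?thesis
      by (simp add: algebra_simps)
  qed
  then show ?thesis using ab
    by (intro fundamental_theorem_of_calculus) (auto simp: has_real_derivative_iff_has_vector_derivative)
qed

locale ctx =
  fixes f g g1 g2 :: "real \<Rightarrow> real" and e0 d2 :: real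
  assumes f_der: "\<And>x. 0 < x \<Longrightarrow> x < 1 \<Longrightarrow> (f has_real_derivative - g x) (at x)"
    and g_der: "\<And>x. 0 < x \<Longrightarrow> x < 1 \<Longrightarrow> (g has_real_derivative g1 x) (at x)"
    and g1_der: "\<And>x. 0 < x \<Longrightarrow> x < 1 \<Longrightarrow> (g1 has_real_derivative g2 x) (at x)"
    and g2_cont: "\<And>x. 0 < x \<Longrightarrow> x < 1 \<Longrightarrow> isCont g2 x"
    and g_pos: "\<And>x. 0 < x \<Longrightarrow> x < 1 \<Longrightarrow> 0 < g x"
    and e0: "0 < e0" "e0 \<le> 1/4"
    and g2_lo: "\<And>x. 0 < x \<Longrightarrow> x < e0 \<Longrightarrow> 0 < g2 x"
    and g2_hi: "\<And>x. 1 - e0 < x \<Longrightarrow> x < 1 \<Longrightarrow> 0 < g2 x"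
    and d2: "0 < d2" "d2 < 1"
    and g1_neg: "\<And>x. 0 < x \<Longrightarrow> x < d2 \<Longrightarrow> g1 x < 0"
    and f_top: "\<And>K. \<exists>a>0. \<forall>x. 0 < x \<and> x < a \<longrightarrow> K < f x"
    and f_bot: "\<And>K. \<exists>b<1. \<forall>x. b < x \<and> x < 1 \<longrightarrow> f x < K"
begin

lemma cont_f: "continuous_on {0<..<1} f"
  by (intro continuous_at_imp_continuous_on ballI DERIV_isCont[OF f_der]) auto
lemma cont_g: "continuous_on {0<..<1} g"
  by (intro continuous_at_imp_continuous_on ballI DERIV_isCont[OF g_der]) auto
lemma cont_g1: "continuous_on {0<..<1} g1"
  by (intro continuous_at_imp_continuous_on ballI DERIV_isCont[OF g1_der]) auto
lemma cont_g2: "continuous_on {0<..<1} g2"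
  by (intro continuous_at_imp_continuous_on ballI g2_cont) auto

lemma cont_mg: "continuous_on {0<..<1} (\<lambda>x. - g x)"
  using cont_g by (intro continuous_intros)

lemma f_decr: "0 < x \<Longrightarrow> x < y \<Longrightarrow> y < 1 \<Longrightarrow> f y < f x"
proof -
  assume xy: "0 < x" "x < y" "y < 1"
  have "\<And>z. x \<le> z \<Longrightarrow> z \<le> y \<Longrightarrow> (f has_real_derivative - g z) (at z)"
    using xy by (intro f_der) auto
  moreover have "\<And>z. x \<le> z \<Longrightarrow> z \<le> y \<Longrightarrow> - g z < 0" using xy g_pos by force
  ultimately show ?thesis using xy
    by (intro DERIV_neg_imp_decreasing[of x y f]) (auto intro!: exI[of _ "- g _"])
qed

lemma f_mono: "0 < x \<Longrightarrow> x \<le> y \<Longrightarrow> y < 1 \<Longrightarrow> f y \<le> f x"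
  using f_decr by (cases "x = y") (auto simp: less_imp_le)

definition A :: "real \<Rightarrow> real \<Rightarrow> real" where "A x v = W (\<lambda>s. 1) g x v"
definition N :: "real \<Rightarrow> real \<Rightarrow> real" where "N x v = W (\<lambda>s. s\<^sup>2) g x v"
definition A1 :: "real \<Rightarrow> real \<Rightarrow> real" where "A1 x v = W (\<lambda>s. 1 * (1 - s\<^sup>2)) g1 x v"
definition A2 :: "real \<Rightarrow> real \<Rightarrow> real" where "A2 x v = W (\<lambda>s. (1 * (1 - s\<^sup>2)) * (1 - s\<^sup>2)) g2 x v"

lemma A_der_x: "0 < x \<Longrightarrow> x < 1 \<Longrightarrow> 0 < v \<Longrightarrow> v < 1 \<Longrightarrow> ((\<lambda>x. A x v) has_real_derivative A1 x v) (at x)"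
  unfolding A_def A1_def W_def
  by (rule leib_x[OF cont_g cont_g1 g_der]) (auto intro!: continuous_intros)

lemma A1_der_x: "0 < x \<Longrightarrow> x < 1 \<Longrightarrow> 0 < v \<Longrightarrow> v < 1 \<Longrightarrow> ((\<lambda>x. A1 x v) has_real_derivative A2 x v) (at x)"
  unfolding A1_def A2_def W_def
  by (rule leib_x[OF cont_g1 cont_g2 g1_der]) (auto intro!: continuous_intros)

lemma A_der_v: "0 < x \<Longrightarrow> x < 1 \<Longrightarrow> 0 < v \<Longrightarrow> v < 1 \<Longrightarrow>
   ((\<lambda>v. A x v) has_real_derivative W (\<lambda>s. 1 * s\<^sup>2) g1 x v) (at v)"
  unfolding A_def W_def
  by (rule leib_v[OF cont_g cont_g1 g_der]) (auto intro!: continuous_intros)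

lemma N_der_x: "0 < x \<Longrightarrow> x < 1 \<Longrightarrow> 0 < v \<Longrightarrow> v < 1 \<Longrightarrow>
   ((\<lambda>x. N x v) has_real_derivative W (\<lambda>s. s\<^sup>2 * (1 - s\<^sup>2)) g1 x v) (at x)"
  unfolding N_def W_def
  by (rule leib_x[OF cont_g cont_g1 g_der]) (auto intro!: continuous_intros)

lemma N_der_v: "0 < x \<Longrightarrow> x < 1 \<Longrightarrow> 0 < v \<Longrightarrow> v < 1 \<Longrightarrow>
   ((\<lambda>v. N x v) has_real_derivative W (\<lambda>s. s\<^sup>2 * s\<^sup>2) g1 x v) (at v)"
  unfolding N_def W_def
  by (rule leib_v[OF cont_g cont_g1 g_der]) (auto intro!: continuous_intros)

end

lemma BP_W:
  fixes q q' phi phi' :: "real \<Rightarrow> real"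
  assumes qd: "\<And>y. 0 < y \<Longrightarrow> y < 1 \<Longrightarrow> (q has_real_derivative q' y) (at y)"
    and phid: "\<And>s. (phi has_real_derivative phi' s) (at s)"
    and cq: "continuous_on {0<..<1} q" and cq': "continuous_on {0<..<1} q'"
    and c1: "continuous_on {0..1} phi'" and c2: "continuous_on {0..1} (\<lambda>s. phi s * s)"
    and x: "0 < x" "x < 1" and v: "0 < v" "v < 1"
  shows "W phi' q x v - 2 * (x - v) * W (\<lambda>s. phi s * s) q' x v = phi 1 * q v - phi 0 * q x"
proof -
  have hi: "((\<lambda>s. phi' s * q (ps x v s) - 2 * (x - v) * (phi s * s) * q' (ps x v s)) has_integral
           (phi 1 * q (ps x v 1) - phi 0 * q (ps x v 0))) {0..1}"
    by (rule BP_has_integral[OF qd phid x v]) auto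
  have i1: "(\<lambda>s. phi' s * q (ps x v s)) integrable_on {0..1}"
    by (rule W_integrable[OF cq c1 x v])
  have i2: "(\<lambda>s. (phi s * s) * q' (ps x v s)) integrable_on {0..1}"
    by (rule W_integrable[OF cq' c2 x v])
  have "integral {0..1} (\<lambda>s. phi' s * q (ps x v s) - 2 * (x - v) * (phi s * s) * q' (ps x v s))
     = W phi' q x v - 2 * (x - v) * W (\<lambda>s. phi s * s) q' x v"
  proof -
    have i3: "(\<lambda>s. 2 * (x - v) * ((phi s * s) * q' (ps x v s))) integrable_on {0..1}"
      using integrable_on_cmult_left[OF i2, of "2 * (x - v)"] by simp
    have e: "(\<lambda>s. phi' s * q (ps x v s) - 2 * (x - v) * (phi s * s) * q' (ps x v s))
       = (\<lambda>s. phi' s * q (ps x v s) - 2 * (x - v) * ((phi s * s) * q' (ps x v s)))"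
      by (rule ext) (simp only: mult.assoc)
    have "integral {0..1} (\<lambda>s. phi' s * q (ps x v s) - 2 * (x - v) * ((phi s * s) * q' (ps x v s)))
       = integral {0..1} (\<lambda>s. phi' s * q (ps x v s)) - integral {0..1} (\<lambda>s. 2 * (x - v) * ((phi s * s) * q' (ps x v s)))"
      by (rule integral_diff[OF i1 i3])
    also have "\<dots> = W phi' q x v - 2 * (x - v) * W (\<lambda>s. phi s * s) q' x v"
      unfolding W_def by (simp only: integral_mult_right)
    finally show ?thesis using e by simp
  qed
  with integral_unique[OF hi] show ?thesis by simp
qed

context ctx begin

lemma BP3: assumes "0 < x" "x < 1" "0 < v" "v < 1"
  shows "A x v - 2 * (x - v) * W (\<lambda>s. 1 * s\<^sup>2) g1 x v = g v"
proof -
  have "W (\<lambda>s. 1) g x v - 2 * (x - v) * W (\<lambda>s. s * s) g1 x v = 1 * g v - 0 * g x"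
    by (rule BP_W[OF g_der _ cont_g cont_g1 _ _ assms, of "\<lambda>s. s" "\<lambda>s. 1"])
       (auto intro!: derivative_eq_intros continuous_intros)
  moreover have "W (\<lambda>s. s * s) g1 x v = W (\<lambda>s. 1 * s\<^sup>2) g1 x v"
    by (rule W_cong) (simp add: power2_eq_square)
  ultimately show ?thesis by (simp add: A_def)
qed

lemma BP1: assumes "0 < x" "x < 1" "0 < v" "v < 1"
  shows "A x v - 3 * N x v = 2 * (x - v) * W (\<lambda>s. s\<^sup>2 * (1 - s\<^sup>2)) g1 x v"
proof -
  have "W (\<lambda>s. 1 - 3 * s\<^sup>2) g x v - 2 * (x - v) * W (\<lambda>s. (s - s^3) * s) g1 x v = (1 - 1^3) * g v - (0 - 0^3) * g x"
    by (rule BP_W[OF g_der _ cont_g cont_g1 _ _ assms, of "\<lambda>s. s - s^3" "\<lambda>s. 1 - 3 * s\<^sup>2"])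
       (auto intro!: derivative_eq_intros continuous_intros simp: power2_eq_square)
  moreover have "W (\<lambda>s. (s - s^3) * s) g1 x v = W (\<lambda>s. s\<^sup>2 * (1 - s\<^sup>2)) g1 x v"
    by (rule W_cong) (simp add: power2_eq_square power3_eq_cube algebra_simps)
  moreover have "W (\<lambda>s. 1 - 3 * s\<^sup>2) g x v = A x v - 3 * N x v"
  proof -
    have "W (\<lambda>s. 1 - 3 * s\<^sup>2) g x v = W (\<lambda>s. 1 + (-3) * s\<^sup>2) g x v" by (rule W_cong) simp
    also have "\<dots> = W (\<lambda>s. 1) g x v + W (\<lambda>s. (-3) * s\<^sup>2) g x v"
      by (rule W_add[OF cont_g _ _ assms]) (auto intro!: continuous_intros)
    also have "\<dots> = A x v - 3 * N x v"
      using W_cmult[of "-3" "\<lambda>s. s\<^sup>2" g x v] by (simp add: A_def N_def)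
    finally show ?thesis .
  qed
  ultimately show ?thesis by simp
qed

lemma BP2: assumes "0 < x" "x < 1" "0 < v" "v < 1"
  shows "3 * N x v - 2 * (x - v) * W (\<lambda>s. s\<^sup>2 * s\<^sup>2) g1 x v = g v"
proof -
  have "W (\<lambda>s. 3 * s\<^sup>2) g x v - 2 * (x - v) * W (\<lambda>s. s^3 * s) g1 x v = 1^3 * g v - 0^3 * g x"
    by (rule BP_W[OF g_der _ cont_g cont_g1 _ _ assms, of "\<lambda>s. s^3" "\<lambda>s. 3 * s\<^sup>2"])
       (auto intro!: derivative_eq_intros continuous_intros)
  moreover have "W (\<lambda>s. s^3 * s) g1 x v = W (\<lambda>s. s\<^sup>2 * s\<^sup>2) g1 x v"
    by (rule W_cong) (simp add: power2_eq_square power3_eq_cube algebra_simps)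
  moreover have "W (\<lambda>s. 3 * s\<^sup>2) g x v = 3 * N x v" by (simp add: W_cmult N_def)
  ultimately show ?thesis by simp
qed

lemma BP_f: assumes "0 < x" "x < 1" "0 < v" "v < 1" "0 \<le> a" "a \<le> b" "b \<le> 1"
  shows "((\<lambda>s. 2 * (x - v) * s * g (ps x v s)) has_integral (f (ps x v b) - f (ps x v a))) {a..b}"
proof -
  have "((\<lambda>s. 0 * f (ps x v s) - 2 * (x - v) * (1 * s) * (- g (ps x v s))) has_integral
           (1 * f (ps x v b) - 1 * f (ps x v a))) {a..b}"
    by (rule BP_has_integral[OF f_der _ assms(1-4) assms(5-7), of "\<lambda>s. 1" "\<lambda>s. 0"]) auto
  then show ?thesis by simp
qed

lemma BP_g1: assumes "0 < x" "x < 1" "0 < v" "v < 1" "0 \<le> a" "a \<le> b" "b \<le> 1"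
  shows "((\<lambda>s. 2 * (x - v) * s * g2 (ps x v s)) has_integral (g1 (ps x v a) - g1 (ps x v b))) {a..b}"
proof -
  have "((\<lambda>s. 0 * g1 (ps x v s) - 2 * (x - v) * (1 * s) * (g2 (ps x v s))) has_integral
           (1 * g1 (ps x v b) - 1 * g1 (ps x v a))) {a..b}"
    by (rule BP_has_integral[OF g1_der _ assms(1-4) assms(5-7), of "\<lambda>s. 1" "\<lambda>s. 0"]) auto
  from has_integral_neg[OF this] show ?thesis by simp
qed


lemma A_der_v': assumes "0 < x" "x < 1" "0 < v" "v < 1" "v \<noteq> x"
  shows "((\<lambda>v. A x v) has_real_derivative (A x v - g v) / (2 * (x - v))) (at v)"
proof -
  have "W (\<lambda>s. 1 * s\<^sup>2) g1 x v = (A x v - g v) / (2 * (x - v))"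
    using BP3[OF assms(1-4)] assms(5) by (simp add: field_simps)
  then show ?thesis using A_der_v[OF assms(1-4)] by simp
qed

lemma N_der_x': assumes "0 < x" "x < 1" "0 < v" "v < 1" "v \<noteq> x"
  shows "((\<lambda>x. N x v) has_real_derivative (A x v - 3 * N x v) / (2 * (x - v))) (at x)"
proof -
  have "W (\<lambda>s. s\<^sup>2 * (1 - s\<^sup>2)) g1 x v = (A x v - 3 * N x v) / (2 * (x - v))"
    using BP1[OF assms(1-4)] assms(5) by (simp add: field_simps)
  then show ?thesis using N_der_x[OF assms(1-4)] by simp
qed

lemma N_der_v': assumes "0 < x" "x < 1" "0 < v" "v < 1" "v \<noteq> x"
  shows "((\<lambda>v. N x v) has_real_derivative (3 * N x v - g v) / (2 * (x - v))) (at v)"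
proof -
  have "W (\<lambda>s. s\<^sup>2 * s\<^sup>2) g1 x v = (3 * N x v - g v) / (2 * (x - v))"
    using BP2[OF assms(1-4)] assms(5) by (simp add: field_simps)
  then show ?thesis using N_der_v[OF assms(1-4)] by simp
qed

end

context ctx begin

definition Gf :: "real \<Rightarrow> real \<Rightarrow> real" where "Gf x v = 2 * (x - v) * sqrt (x - v) * N x v"
definition Pf :: "real \<Rightarrow> real \<Rightarrow> real" where "Pf x v = (x - v) * sqrt (x - v) * (2 * x + 3 * v)"
definition Phi :: "real \<Rightarrow> real \<Rightarrow> real \<Rightarrow> real" where "Phi t x v = A x v - 20 * t * (2 * x + v)"
definition E :: "real \<Rightarrow> real \<Rightarrow> real \<Rightarrow> real" where "E t x v = Gf x v - 8 * t * Pf x v"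
definition h :: "real \<Rightarrow> real \<Rightarrow> real" where "h t p = g p - 60 * t * p"
definition R :: "real \<Rightarrow> real \<Rightarrow> real" where "R x v = 2 * A x v * Pf x v - 5 * Gf x v * (2 * x + v)"
definition tau :: "real \<Rightarrow> real \<Rightarrow> real" where "tau x v = Gf x v / (8 * Pf x v)"

lemma G_der_x: assumes "0 < v" "v < x" "x < 1"
  shows "((\<lambda>x. Gf x v) has_real_derivative sqrt (x - v) * A x v) (at x)"
proof -
  have d: "0 < x - v" using assms by simp
  have nd: "((\<lambda>x. N x v) has_real_derivative (A x v - 3 * N x v) / (2 * (x - v))) (at x)"
    using assms by (intro N_der_x') auto
  have sd: "((\<lambda>x. sqrt (x - v)) has_real_derivative inverse (sqrt (x - v)) / 2 * 1) (at x)"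
    by (rule DERIV_chain2[where f=sqrt and g="\<lambda>x. x - v" and x=x, OF DERIV_real_sqrt[OF d]])
       (auto intro!: derivative_eq_intros)
  have d2: "((\<lambda>x. 2 * (x - v)) has_real_derivative 2) (at x)"
    by (auto intro!: derivative_eq_intros)
  have s: "sqrt (x - v) * sqrt (x - v) = x - v" using d by simp
  have sp: "sqrt (x - v) > 0" using d by simp
  have s2: "\<And>z. sqrt (x - v) * (sqrt (x - v) * z) = (x - v) * z" using s by (simp add: mult.assoc[symmetric])
  define r where "r = sqrt (x - v)"
  have xv: "x - v = r\<^sup>2" using d by (simp add: r_def)
  have rp: "r > 0" using sp by (simp add: r_def)
  show ?thesis unfolding Gf_def
    by (rule DERIV_cong[OF DERIV_mult[OF DERIV_mult[OF d2 sd] nd]])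
       (use rp in \<open>simp only: xv real_sqrt_abs abs_of_pos, simp add: field_simps power2_eq_square\<close>)
qed

lemma sqrt_der_v: assumes "v < x"
  shows "((\<lambda>v. sqrt (x - v)) has_real_derivative inverse (sqrt (x - v)) / 2 * (- 1)) (at v)"
proof -
  have d: "0 < x - v" using assms by simp
  show ?thesis
    by (rule DERIV_chain2[where f=sqrt and g="\<lambda>v. x - v" and x=v, OF DERIV_real_sqrt[OF d]])
       (auto intro!: derivative_eq_intros)
qed

lemma sqrt_der_x: assumes "v < x"
  shows "((\<lambda>x. sqrt (x - v)) has_real_derivative inverse (sqrt (x - v)) / 2 * 1) (at x)"
proof -
  have d: "0 < x - v" using assms by simp
  show ?thesis
    by (rule DERIV_chain2[where f=sqrt and g="\<lambda>x. x - v" and x=x, OF DERIV_real_sqrt[OF d]])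
       (auto intro!: derivative_eq_intros)
qed

lemma G_der_v: assumes "0 < v" "v < x" "x < 1"
  shows "((\<lambda>v. Gf x v) has_real_derivative - sqrt (x - v) * g v) (at v)"
proof -
  have d: "0 < x - v" using assms by simp
  have nd: "((\<lambda>v. N x v) has_real_derivative (3 * N x v - g v) / (2 * (x - v))) (at v)"
    using assms by (intro N_der_v') auto
  have sd: "((\<lambda>v. sqrt (x - v)) has_real_derivative inverse (sqrt (x - v)) / 2 * (- 1)) (at v)"
    using assms by (intro sqrt_der_v) auto
  have d2: "((\<lambda>v. 2 * (x - v)) has_real_derivative - 2) (at v)"
    by (auto intro!: derivative_eq_intros)
  define r where "r = sqrt (x - v)"
  have xv: "x - v = r\<^sup>2" using d by (simp add: r_def)
  have rp: "r > 0" using d by (simp add: r_def)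
  show ?thesis unfolding Gf_def
    by (rule DERIV_cong[OF DERIV_mult[OF DERIV_mult[OF d2 sd] nd]])
       (use rp in \<open>simp only: xv real_sqrt_abs abs_of_pos, simp add: field_simps power2_eq_square\<close>)
qed

lemma P_der_x: assumes "v < x"
  shows "((\<lambda>x. Pf x v) has_real_derivative 5 / 2 * sqrt (x - v) * (2 * x + v)) (at x)"
proof -
  have d: "0 < x - v" using assms by simp
  have sd: "((\<lambda>x. sqrt (x - v)) has_real_derivative inverse (sqrt (x - v)) / 2 * 1) (at x)"
    using assms by (intro sqrt_der_x) auto
  have d1: "((\<lambda>x. x - v) has_real_derivative 1) (at x)" by (auto intro!: derivative_eq_intros)
  have d3: "((\<lambda>x. 2 * x + 3 * v) has_real_derivative 2) (at x)" by (auto intro!: derivative_eq_intros)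
  define r where "r = sqrt (x - v)"
  have xv: "x - v = r\<^sup>2" using d by (simp add: r_def)
  have xx: "x = r\<^sup>2 + v" using xv by simp
  have rp: "r > 0" using d by (simp add: r_def)
  show ?thesis unfolding Pf_def
    by (rule DERIV_cong[OF DERIV_mult[OF DERIV_mult[OF d1 sd] d3]])
       (use rp in \<open>simp only: xv real_sqrt_abs abs_of_pos, simp add: field_simps power2_eq_square xx\<close>)
qed

lemma P_der_v: assumes "v < x"
  shows "((\<lambda>v. Pf x v) has_real_derivative - 15 / 2 * v * sqrt (x - v)) (at v)"
proof -
  have d: "0 < x - v" using assms by simp
  have sd: "((\<lambda>v. sqrt (x - v)) has_real_derivative inverse (sqrt (x - v)) / 2 * (- 1)) (at v)"
    using assms by (intro sqrt_der_v) auto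
  have d1: "((\<lambda>v. x - v) has_real_derivative - 1) (at v)" by (auto intro!: derivative_eq_intros)
  have d3: "((\<lambda>v. 2 * x + 3 * v) has_real_derivative 3) (at v)" by (auto intro!: derivative_eq_intros)
  define r where "r = sqrt (x - v)"
  have xv: "x - v = r\<^sup>2" using d by (simp add: r_def)
  have xx: "x = r\<^sup>2 + v" using xv by simp
  have rp: "r > 0" using d by (simp add: r_def)
  show ?thesis unfolding Pf_def
    by (rule DERIV_cong[OF DERIV_mult[OF DERIV_mult[OF d1 sd] d3]])
       (use rp in \<open>simp only: xv real_sqrt_abs abs_of_pos, simp add: field_simps power2_eq_square xx\<close>)
qed

lemma E_der_x: assumes "0 < v" "v < x" "x < 1"
  shows "((\<lambda>x. E t x v) has_real_derivative sqrt (x - v) * Phi t x v) (at x)"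
  unfolding E_def
  by (rule DERIV_cong[OF DERIV_diff[OF G_der_x[OF assms] DERIV_cmult[OF P_der_x]]])
     (use assms in \<open>auto simp: Phi_def algebra_simps\<close>)

lemma E_der_v: assumes "0 < v" "v < x" "x < 1"
  shows "((\<lambda>v. E t x v) has_real_derivative - sqrt (x - v) * h t v) (at v)"
  unfolding E_def
  by (rule DERIV_cong[OF DERIV_diff[OF G_der_v[OF assms] DERIV_cmult[OF P_der_v]]])
     (use assms in \<open>auto simp: h_def algebra_simps\<close>)

lemma Phi_der_x: assumes "0 < v" "v < 1" "0 < x" "x < 1"
  shows "((\<lambda>x. Phi t x v) has_real_derivative A1 x v - 40 * t) (at x)"
  unfolding Phi_def
  by (rule DERIV_cong[OF DERIV_diff[OF A_der_x DERIV_cmult]])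
     (use assms in \<open>auto intro!: derivative_eq_intros\<close>)

lemma Phi1_der_x: assumes "0 < v" "v < 1" "0 < x" "x < 1"
  shows "((\<lambda>x. A1 x v - 40 * t) has_real_derivative A2 x v) (at x)"
  by (rule DERIV_cong[OF DERIV_diff[OF A1_der_x DERIV_const]]) (use assms in auto)

lemma Phi_diag: "0 < v \<Longrightarrow> v < 1 \<Longrightarrow> Phi t v v = h t v"
  unfolding Phi_def h_def A_def using W_const[of g v] by simp

lemma E_diag: "E t v v = 0"
  by (simp add: E_def Gf_def Pf_def)

end

lemma int_sub:
  fixes q wgt :: "real \<Rightarrow> real"
  assumes "continuous_on {0<..<1} q" "continuous_on {0..1} wgt"
    "0 < x" "x < 1" "0 < v" "v < 1" "0 \<le> a" "b \<le> 1"
  shows "(\<lambda>s. wgt s * q (ps x v s)) integrable_on {a..b}"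
  by (rule integrable_continuous_real, rule continuous_on_subset[OF cont_ps_s[OF assms(1-6)]]) (use assms in auto)

lemma integral_pos_lemma:
  fixes phi :: "real \<Rightarrow> real"
  assumes c: "continuous_on {0..1} phi" and p: "\<And>s. 0 \<le> s \<Longrightarrow> s \<le> 1/2 \<Longrightarrow> 0 < phi s"
    and nn: "\<And>s. 0 \<le> s \<Longrightarrow> s \<le> 1 \<Longrightarrow> 0 \<le> phi s"
  shows "0 < integral {0..1} phi"
proof -
  have c2: "continuous_on {0..1/2} phi" by (rule continuous_on_subset[OF c]) auto
  obtain m where m: "m \<in> {0..1/2}" "\<And>s. s \<in> {0..1/2} \<Longrightarrow> phi m \<le> phi s"
    using continuous_attains_inf[OF compact_Icc _ c2] by auto
  have mp: "0 < phi m" using m p by auto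
  have i: "phi integrable_on {0..1}" by (rule integrable_continuous_real[OF c])
  have "integral {0..1/2} (\<lambda>s::real. phi m) \<le> integral {0..1/2} phi"
    by (intro integral_le integrable_continuous_real c2) (use m in auto)
  then have 1: "phi m / 2 \<le> integral {0..1/2} phi" by simp
  have 2: "0 \<le> integral {1/2..1} phi"
    by (intro integral_nonneg integrable_continuous_real continuous_on_subset[OF c]) (use nn in auto)
  have "integral {0..1/2} phi + integral {1/2..1} phi = integral {0..1} phi"
    by (rule Henstock_Kurzweil_Integration.integral_combine[OF _ _ i]) auto
  then show ?thesis using 1 2 mp by linarith
qed

context ctx begin

lemma int_seg_sg:
  assumes "0 < x" "x < 1" "0 < v" "v < 1" "x \<noteq> v" "0 \<le> a" "a \<le> b" "b \<le> 1"
  shows "integral {a..b} (\<lambda>s. s * g (ps x v s)) = (f (ps x v b) - f (ps x v a)) / (2 * (x - v))"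
proof -
  have hi: "((\<lambda>s. 2 * (x - v) * s * g (ps x v s)) has_integral (f (ps x v b) - f (ps x v a))) {a..b}"
    by (rule BP_f) (use assms in auto)
  have e: "(\<lambda>s. 2 * (x - v) * s * g (ps x v s)) = (\<lambda>s. (2 * (x - v)) * (s * g (ps x v s)))"
    by (rule ext) (simp only: mult.assoc)
  have "integral {a..b} (\<lambda>s. (2 * (x - v)) * (s * g (ps x v s))) = f (ps x v b) - f (ps x v a)"
    using integral_unique[OF hi] e by simp
  then have "(2 * (x - v)) * integral {a..b} (\<lambda>s. s * g (ps x v s)) = f (ps x v b) - f (ps x v a)"
    by (simp only: integral_mult_right)
  then show ?thesis using assms(5) by (simp add: field_simps)
qed

lemma A_ge: assumes "0 < v" "v < x" "x < 1"
  shows "(f v - f x) / (2 * (x - v)) \<le> A x v"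
proof -
  have "integral {0..1} (\<lambda>s. s * g (ps x v s)) \<le> integral {0..1} (\<lambda>s. 1 * g (ps x v s))"
  proof (rule integral_le)
    show "(\<lambda>s. s * g (ps x v s)) integrable_on {0..1}"
      by (rule W_integrable[OF cont_g]) (use assms in \<open>auto intro: continuous_intros\<close>)
    show "(\<lambda>s. 1 * g (ps x v s)) integrable_on {0..1}"
      by (rule W_integrable[OF cont_g]) (use assms in \<open>auto intro: continuous_intros\<close>)
    fix s :: real assume s: "s \<in> {0..1}"
    have "0 < g (ps x v s)" using ps_in[of x v s] s assms by (intro g_pos) auto
    then show "s * g (ps x v s) \<le> 1 * g (ps x v s)" using s by (intro mult_right_mono) auto
  qed
  then show ?thesis using int_seg_sg[of x v 0 1] assms by (simp add: A_def W_def)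
qed

lemma N_le: assumes "0 < v" "v < x" "x < 1"
  shows "N x v \<le> (f v - f x) / (2 * (x - v))"
proof -
  have "integral {0..1} (\<lambda>s. s\<^sup>2 * g (ps x v s)) \<le> integral {0..1} (\<lambda>s. s * g (ps x v s))"
  proof (rule integral_le)
    show "(\<lambda>s. s\<^sup>2 * g (ps x v s)) integrable_on {0..1}"
      by (rule W_integrable[OF cont_g]) (use assms in \<open>auto intro: continuous_intros\<close>)
    show "(\<lambda>s. s * g (ps x v s)) integrable_on {0..1}"
      by (rule W_integrable[OF cont_g]) (use assms in \<open>auto intro: continuous_intros\<close>)
    fix s :: real assume s: "s \<in> {0..1}"
    have "0 < g (ps x v s)" using ps_in[of x v s] s assms by (intro g_pos) auto
    moreover have "s\<^sup>2 \<le> s" using s by (auto simp: power2_eq_square intro: mult_left_le_one_le)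
    ultimately show "s\<^sup>2 * g (ps x v s) \<le> s * g (ps x v s)" by (intro mult_right_mono) auto
  qed
  then show ?thesis using int_seg_sg[of x v 0 1] assms by (simp add: N_def W_def)
qed

lemma G_le: assumes "0 < v" "v < x" "x < 1"
  shows "Gf x v \<le> sqrt (x - v) * (f v - f x)"
proof -
  have d: "0 < x - v" using assms by simp
  have "Gf x v = (2 * (x - v) * sqrt (x - v)) * N x v" by (simp add: Gf_def)
  also have "\<dots> \<le> (2 * (x - v) * sqrt (x - v)) * ((f v - f x) / (2 * (x - v)))"
    using N_le[OF assms] d by (intro mult_left_mono) auto
  also have "\<dots> = sqrt (x - v) * (f v - f x)" using d by (simp add: field_simps)
  finally show ?thesis .
qed

lemma N_ge: assumes "0 < v" "v < x" "x < 1" "0 < s0" "s0 \<le> 1"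
  shows "s0 * (f v - f (ps x v s0)) / (2 * (x - v)) \<le> N x v"
proof -
  have i: "(\<lambda>s. s\<^sup>2 * g (ps x v s)) integrable_on {0..1}"
    by (rule W_integrable[OF cont_g]) (use assms in \<open>auto intro: continuous_intros\<close>)
  have split: "integral {0..s0} (\<lambda>s. s\<^sup>2 * g (ps x v s)) + integral {s0..1} (\<lambda>s. s\<^sup>2 * g (ps x v s)) = N x v"
    unfolding N_def W_def by (rule Henstock_Kurzweil_Integration.integral_combine[OF _ _ i]) (use assms in auto)
  have 1: "0 \<le> integral {0..s0} (\<lambda>s. s\<^sup>2 * g (ps x v s))"
  proof (rule integral_nonneg)
    show "(\<lambda>s. s\<^sup>2 * g (ps x v s)) integrable_on {0..s0}"
      by (rule int_sub[OF cont_g]) (use assms in \<open>auto intro: continuous_intros\<close>)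
    fix s assume s: "s \<in> {0..s0}"
    have "0 < g (ps x v s)" using ps_in[of x v s] s assms by (intro g_pos) auto
    then show "0 \<le> s\<^sup>2 * g (ps x v s)" by simp
  qed
  have 2: "integral {s0..1} (\<lambda>s. s0 * (s * g (ps x v s))) \<le> integral {s0..1} (\<lambda>s. s\<^sup>2 * g (ps x v s))"
  proof (rule integral_le)
    show "(\<lambda>s. s0 * (s * g (ps x v s))) integrable_on {s0..1}"
      by (rule integrable_on_mult_right, rule int_sub[OF cont_g]) (use assms in \<open>auto intro: continuous_intros\<close>)
    show "(\<lambda>s. s\<^sup>2 * g (ps x v s)) integrable_on {s0..1}"
      by (rule int_sub[OF cont_g]) (use assms in \<open>auto intro: continuous_intros\<close>)
    fix s assume s: "s \<in> {s0..1}"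
    have "0 < g (ps x v s)" using ps_in[of x v s] s assms by (intro g_pos) auto
    moreover have "s0 * s \<le> s\<^sup>2" using s assms by (auto simp: power2_eq_square intro: mult_right_mono)
    ultimately show "s0 * (s * g (ps x v s)) \<le> s\<^sup>2 * g (ps x v s)"
      by (simp only: mult.assoc[symmetric]) (intro mult_right_mono, auto)
  qed
  have 3: "integral {s0..1} (\<lambda>s. s0 * (s * g (ps x v s))) = s0 * ((f v - f (ps x v s0)) / (2 * (x - v)))"
    using int_seg_sg[of x v s0 1] assms by (simp only: integral_mult_right) simp
  show ?thesis using split 1 2 3 by simp
qed

lemma G_ge: assumes "0 < v" "v < x" "x < 1" "0 < s0" "s0 \<le> 1"
  shows "sqrt (x - v) * s0 * (f v - f (ps x v s0)) \<le> Gf x v"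
proof -
  have d: "0 < x - v" using assms by simp
  have "sqrt (x - v) * s0 * (f v - f (ps x v s0)) = (2 * (x - v) * sqrt (x - v)) * (s0 * (f v - f (ps x v s0)) / (2 * (x - v)))"
    using d by (simp add: field_simps)
  also have "\<dots> \<le> (2 * (x - v) * sqrt (x - v)) * N x v"
    using N_ge[OF assms] d by (intro mult_left_mono) auto
  also have "\<dots> = Gf x v" by (simp add: Gf_def)
  finally show ?thesis .
qed

lemma A_le: assumes "0 < v" "v < x" "x < 1" "0 < s0" "s0 \<le> 1" "0 \<le> B"
    and Bb: "\<And>s. 0 \<le> s \<Longrightarrow> s \<le> s0 \<Longrightarrow> g (ps x v s) \<le> B"
  shows "A x v \<le> B + (f v - f (ps x v s0)) / (2 * s0 * (x - v))"
proof -
  have i: "(\<lambda>s. 1 * g (ps x v s)) integrable_on {0..1}"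
    by (rule W_integrable[OF cont_g]) (use assms in \<open>auto intro: continuous_intros\<close>)
  have split: "integral {0..s0} (\<lambda>s. 1 * g (ps x v s)) + integral {s0..1} (\<lambda>s. 1 * g (ps x v s)) = A x v"
    unfolding A_def W_def by (rule Henstock_Kurzweil_Integration.integral_combine[OF _ _ i]) (use assms in auto)
  have 1: "integral {0..s0} (\<lambda>s. 1 * g (ps x v s)) \<le> integral {0..s0} (\<lambda>s. B)"
    by (rule integral_le, rule int_sub[OF cont_g]) (use assms Bb in \<open>auto intro: continuous_intros\<close>)
  have h1b: "integral {0..s0} (\<lambda>s. B) \<le> B" using assms by (simp add: mult_left_le_one_le)
  have 2: "integral {s0..1} (\<lambda>s. 1 * g (ps x v s)) \<le> integral {s0..1} (\<lambda>s. (1 / s0) * (s * g (ps x v s)))"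
  proof (rule integral_le)
    show "(\<lambda>s. (1 / s0) * (s * g (ps x v s))) integrable_on {s0..1}"
      by (rule integrable_on_mult_right, rule int_sub[OF cont_g]) (use assms in \<open>auto intro: continuous_intros\<close>)
    show "(\<lambda>s. 1 * g (ps x v s)) integrable_on {s0..1}"
      by (rule int_sub[OF cont_g]) (use assms in \<open>auto intro: continuous_intros\<close>)
    fix s assume s: "s \<in> {s0..1}"
    have gp: "0 < g (ps x v s)" using ps_in[of x v s] s assms by (intro g_pos) auto
    have "1 \<le> s / s0" using s assms by (auto simp: field_simps)
    then have "1 * g (ps x v s) \<le> (s / s0) * g (ps x v s)" using gp by (intro mult_right_mono) auto
    then show "1 * g (ps x v s) \<le> (1 / s0) * (s * g (ps x v s))" by simp
  qed
  have 3: "integral {s0..1} (\<lambda>s. (1 / s0) * (s * g (ps x v s))) = (1 / s0) * ((f v - f (ps x v s0)) / (2 * (x - v)))"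
    using int_seg_sg[of x v s0 1] assms by (simp only: integral_mult_right) simp
  have "(1 / s0) * ((f v - f (ps x v s0)) / (2 * (x - v))) = (f v - f (ps x v s0)) / (2 * s0 * (x - v))"
    by (simp add: field_simps)
  then show ?thesis using split 1 h1b 2 3 by linarith
qed

end

context ctx begin

lemma g1_incr: assumes "1 - e0 < a" "a < b" "b < 1" shows "g1 a < g1 b"
proof (rule DERIV_pos_imp_increasing[OF assms(2)])
  fix x assume "a \<le> x" "x \<le> b"
  with assms have "0 < x" "x < 1" "1 - e0 < x" using e0 by auto
  then show "\<exists>y. (g1 has_real_derivative y) (at x) \<and> 0 < y"
    using g1_der g2_hi by blast
qed

lemma g1_mono: assumes "1 - e0 < a" "a \<le> b" "b < 1" shows "g1 a \<le> g1 b"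
  using g1_incr[of a b] assms by (cases "a = b") auto

lemma g1_unbounded: "\<exists>c1<1. \<forall>x. c1 \<le> x \<longrightarrow> x < 1 \<longrightarrow> K < g1 x"
proof (rule ccontr)
  assume nc: "\<not> ?thesis"
  have le: "g1 x \<le> K" if "1 - e0 < x" "x < 1" for x
  proof (rule ccontr)
    assume "\<not> g1 x \<le> K"
    then have "\<forall>y. x \<le> y \<longrightarrow> y < 1 \<longrightarrow> K < g1 y"
      using g1_mono[of x] that by (meson le_less_trans not_le)
    then show False using nc that by blast
  qed
  define a where "a = 1 - e0 / 2"
  have a: "1 - e0 < a" "a < 1" "0 < a" using e0 by (auto simp: a_def)
  define K' where "K' = max K 0"
  define B where "B = g a + K'"
  have B: "0 \<le> B" using g_pos[of a] a by (simp add: B_def K'_def)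
  have gb: "g y \<le> B" if "a \<le> y" "y < 1" for y
  proof -
    have "(\<lambda>y. g y - K' * y) y \<le> (\<lambda>y. g y - K' * y) a"
    proof (rule DERIV_nonpos_imp_nonincreasing[OF that(1)])
      fix z assume z: "a \<le> z" "z \<le> y"
      then have z01: "0 < z" "z < 1" "1 - e0 < z" using a that by auto
      have "((\<lambda>y. g y - K' * y) has_real_derivative g1 z - K' * 1) (at z)"
        by (intro DERIV_diff g_der[OF z01(1,2)] DERIV_cmult DERIV_ident)
      moreover have "g1 z - K' * 1 \<le> 0" using le[OF z01(3,2)] by (simp add: K'_def)
      ultimately show "\<exists>d. ((\<lambda>y. g y - K' * y) has_real_derivative d) (at z) \<and> d \<le> 0" by blast
    qed
    then have "g y \<le> g a + K' * (y - a)" by (simp add: algebra_simps)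
    moreover have "K' * (y - a) \<le> K'" using that a by (simp add: K'_def mult_left_le)
    ultimately show ?thesis by (simp add: B_def)
  qed
  have fb: "f a - B \<le> f y" if "a \<le> y" "y < 1" for y
  proof -
    have "(\<lambda>y. f y + B * y) a \<le> (\<lambda>y. f y + B * y) y"
    proof (rule DERIV_nonneg_imp_nondecreasing[OF that(1)])
      fix z assume z: "a \<le> z" "z \<le> y"
      then have z01: "0 < z" "z < 1" using a that by auto
      have "((\<lambda>y. f y + B * y) has_real_derivative - g z + B * 1) (at z)"
        by (intro DERIV_add f_der[OF z01] DERIV_cmult DERIV_ident)
      moreover have "0 \<le> - g z + B * 1" using gb[of z] z that by simp
      ultimately show "\<exists>d. ((\<lambda>y. f y + B * y) has_real_derivative d) (at z) \<and> 0 \<le> d" by blast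
    qed
    then have "f a - B * (y - a) \<le> f y" by (simp add: algebra_simps)
    moreover have "B * (y - a) \<le> B" using that a B by (simp add: mult_left_le)
    ultimately show ?thesis by simp
  qed
  obtain b where b: "b < 1" "\<forall>x. b < x \<and> x < 1 \<longrightarrow> f x < f a - B" using f_bot[of "f a - B"] by blast
  define y where "y = (max a b + 1) / 2"
  have "a \<le> y" "y < 1" "b < y" using a b by (auto simp: y_def)
  then show False using fb[of y] b by force
qed

lemma g2_lower: "\<exists>M2\<ge>0. \<forall>y. 0 < y \<longrightarrow> y < 1 \<longrightarrow> - M2 \<le> g2 y"
proof -
  have c: "continuous_on {e0..1 - e0} g2" by (rule continuous_on_subset[OF cont_g2]) (use e0 in auto)
  have ne: "{e0..1 - e0} \<noteq> {}" using e0 by auto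
  obtain m where m: "m \<in> {e0..1 - e0}" "\<And>y. y \<in> {e0..1 - e0} \<Longrightarrow> g2 m \<le> g2 y"
    using continuous_attains_inf[OF compact_Icc ne c] by blast
  show ?thesis
  proof (intro exI[of _ "max 0 (- g2 m)"] conjI allI impI)
    fix y :: real assume y: "0 < y" "y < 1"
    show "- max 0 (- g2 m) \<le> g2 y"
    proof (cases "y < e0")
      case True then show ?thesis using g2_lo[of y] y by simp
    next
      case False
      show ?thesis
      proof (cases "1 - e0 < y")
        case True then show ?thesis using g2_hi[of y] y by simp
      next
        case False2: False
        then show ?thesis using m(2)[of y] False by simp
      qed
    qed
  qed simp
qed

lemma int_seg_g2:
  assumes "0 < x" "x < 1" "0 < v" "v < 1" "x \<noteq> v" "0 \<le> a" "a \<le> b" "b \<le> 1"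
  shows "integral {a..b} (\<lambda>s. s * g2 (ps x v s)) = (g1 (ps x v a) - g1 (ps x v b)) / (2 * (x - v))"
proof -
  have hi: "((\<lambda>s. 2 * (x - v) * s * g2 (ps x v s)) has_integral (g1 (ps x v a) - g1 (ps x v b))) {a..b}"
    by (rule BP_g1) (use assms in auto)
  have e: "(\<lambda>s. 2 * (x - v) * s * g2 (ps x v s)) = (\<lambda>s. (2 * (x - v)) * (s * g2 (ps x v s)))"
    by (rule ext) (simp only: mult.assoc)
  have "integral {a..b} (\<lambda>s. (2 * (x - v)) * (s * g2 (ps x v s))) = g1 (ps x v a) - g1 (ps x v b)"
    using integral_unique[OF hi] e by simp
  then have "(2 * (x - v)) * integral {a..b} (\<lambda>s. s * g2 (ps x v s)) = g1 (ps x v a) - g1 (ps x v b)"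
    by (simp only: integral_mult_right)
  then show ?thesis using assms(5) by (simp add: field_simps)
qed

lemma convex_const: "\<exists>c. 1 - e0 / 2 \<le> c \<and> c < 1 \<and>
    (\<forall>x v. c \<le> x \<longrightarrow> x < 1 \<longrightarrow> 0 < v \<longrightarrow> v \<le> x \<longrightarrow> 0 < A2 x v)"
proof -
  obtain M2 where M2: "0 \<le> M2" "\<And>y. 0 < y \<Longrightarrow> y < 1 \<Longrightarrow> - M2 \<le> g2 y" using g2_lower by blast
  define \<sigma> where "\<sigma> = sqrt e0 / 2"
  have \<sigma>2: "\<sigma>\<^sup>2 = e0 / 4" using e0 by (simp add: \<sigma>_def power_divide)
  have \<sigma>p: "0 < \<sigma>" using e0 by (simp add: \<sigma>_def)
  have "sqrt e0 \<le> sqrt (1/4)" using e0 by (intro real_sqrt_le_mono) auto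
  then have \<sigma>le: "\<sigma> \<le> 1/4" by (simp add: \<sigma>_def real_sqrt_divide)
  define \<kappa> where "\<kappa> = \<sigma>\<^sup>2 * (e0 / 2)"
  have \<kappa>: "0 < \<kappa>" "\<kappa> < e0 / 2" using e0 \<sigma>2 by (auto simp: \<kappa>_def)
  have s1: "0 < 1 - \<sigma>\<^sup>2" using \<sigma>2 e0 by simp
  define Q where "Q = 2 * \<sigma> * (M2 + 1) / (1 - \<sigma>\<^sup>2)\<^sup>2"
  have Qp: "0 < Q" using \<sigma>p M2 s1 by (simp add: Q_def)
  obtain c1 where c1: "c1 < 1" "\<And>x. c1 \<le> x \<Longrightarrow> x < 1 \<Longrightarrow> g1 (1 - \<kappa>) + Q < g1 x"
    using g1_unbounded[of "g1 (1 - \<kappa>) + Q"] by blast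
  define c where "c = max c1 (1 - e0 / 2)"
  have c: "1 - e0 / 2 \<le> c" "c < 1" using c1 e0 by (auto simp: c_def)
  show ?thesis
  proof (intro exI[of _ c] conjI c allI impI)
    fix x v :: real assume x: "c \<le> x" "x < 1" and v: "0 < v" "v \<le> x"
    have x0: "0 < x" "1 - e0 / 2 \<le> x" using x c e0 by auto
    have v1: "v < 1" using v x by simp
    define wt where "wt = (\<lambda>s::real. (1 * (1 - s\<^sup>2)) * (1 - s\<^sup>2))"
    have cwt: "continuous_on {0..1} wt" unfolding wt_def by (intro continuous_intros)
    have A2e: "A2 x v = integral {0..1} (\<lambda>s. wt s * g2 (ps x v s))"
      by (simp add: A2_def W_def wt_def)
    have wt01: "0 \<le> wt s" "wt s \<le> 1" if "0 \<le> s" "s \<le> 1" for s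
    proof -
      have "0 \<le> 1 - s\<^sup>2" "1 - s\<^sup>2 \<le> 1" using that by (auto simp: power_le_one)
      then show "0 \<le> wt s" "wt s \<le> 1" unfolding wt_def by (auto simp: mult_le_one)
    qed
    show "0 < A2 x v"
    proof (cases "1 - e0 < v")
      case True
      show ?thesis unfolding A2e
      proof (rule integral_pos_lemma)
        show "continuous_on {0..1} (\<lambda>s. wt s * g2 (ps x v s))"
          by (rule cont_ps_s[OF cont_g2 cwt x0(1) x(2) v(1) v1])
      next
        fix s :: real assume s: "0 \<le> s" "s \<le> 1"
        have "v \<le> ps x v s" "ps x v s \<le> x" using ps_between[OF v(2) s] by auto
        then have "0 < g2 (ps x v s)" using True x by (intro g2_hi) auto
        then show "0 \<le> wt s * g2 (ps x v s)" using wt01[OF s] by simp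
      next
        fix s :: real assume s: "0 \<le> s" "s \<le> 1/2"
        have "v \<le> ps x v s" "ps x v s \<le> x" using ps_between[OF v(2)] s by auto
        then have "0 < g2 (ps x v s)" using True x by (intro g2_hi) auto
        moreover have "0 < 1 - s\<^sup>2"
        proof -
          have "s\<^sup>2 \<le> (1/2)\<^sup>2" using s by (intro power_mono) auto
          then show ?thesis by (simp add: power2_eq_square)
        qed
        ultimately show "0 < wt s * g2 (ps x v s)" by (simp add: wt_def)
      qed
    next
      case False
      have d: "e0 / 2 \<le> x - v" "x - v \<le> 1" using False x0 v x by auto
      have xv: "x \<noteq> v" using d e0 by auto
      have \<sigma>1: "\<sigma> \<le> 1" using \<sigma>le by simp
      have i: "(\<lambda>s. wt s * g2 (ps x v s)) integrable_on {0..1}"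
        by (rule W_integrable[OF cont_g2 cwt x0(1) x(2) v(1) v1])
      have split: "integral {0..\<sigma>} (\<lambda>s. wt s * g2 (ps x v s)) + integral {\<sigma>..1} (\<lambda>s. wt s * g2 (ps x v s)) = A2 x v"
        unfolding A2e by (rule Henstock_Kurzweil_Integration.integral_combine[OF _ _ i]) (use \<sigma>p \<sigma>1 in auto)
      have I2: "- M2 \<le> integral {\<sigma>..1} (\<lambda>s. wt s * g2 (ps x v s))"
      proof -
        have "integral {\<sigma>..1} (\<lambda>s. - M2) \<le> integral {\<sigma>..1} (\<lambda>s. wt s * g2 (ps x v s))"
        proof (rule integral_le)
          show "(\<lambda>s. wt s * g2 (ps x v s)) integrable_on {\<sigma>..1}"
            by (rule int_sub[OF cont_g2 cwt x0(1) x(2) v(1) v1]) (use \<sigma>p in auto)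
        next
          fix s assume s: "s \<in> {\<sigma>..1}"
          then have s01: "0 \<le> s" "s \<le> 1" using \<sigma>p by auto
          have g2l: "- M2 \<le> g2 (ps x v s)" using ps_in[OF x0(1) x(2) v(1) v1 s01] by (intro M2(2)) auto
          have "wt s * (- M2) \<le> wt s * g2 (ps x v s)" using wt01[OF s01] g2l by (intro mult_left_mono) auto
          moreover have "- M2 \<le> wt s * (- M2)" using wt01[OF s01] M2(1) by (simp add: mult_left_le_one_le)
          ultimately show "- M2 \<le> wt s * g2 (ps x v s)" by linarith
        qed (rule integrable_const_ivl)
        moreover have "integral {\<sigma>..1} (\<lambda>s. - M2) = - M2 * (1 - \<sigma>)" using \<sigma>1 by simp
        moreover have "- M2 \<le> - M2 * (1 - \<sigma>)" using M2(1) \<sigma>p \<sigma>1 mult_left_le[of "1 - \<sigma>" M2] by simp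
        ultimately show ?thesis by linarith
      qed
      define p\<sigma> where "p\<sigma> = ps x v \<sigma>"
      have p\<sigma>: "1 - e0 < p\<sigma>" "p\<sigma> \<le> 1 - \<kappa>"
      proof -
        have "\<sigma>\<^sup>2 * (x - v) \<le> \<sigma>\<^sup>2 * 1" using d \<sigma>p by (intro mult_left_mono) auto
        then show "1 - e0 < p\<sigma>" unfolding p\<sigma>_def ps_def using x0 \<sigma>2 e0 by linarith
        have "\<sigma>\<^sup>2 * (e0 / 2) \<le> \<sigma>\<^sup>2 * (x - v)" using d by (intro mult_left_mono) auto
        then show "p\<sigma> \<le> 1 - \<kappa>" unfolding p\<sigma>_def ps_def \<kappa>_def using x by linarith
      qed
      have g1p: "g1 p\<sigma> \<le> g1 (1 - \<kappa>)" using p\<sigma> \<kappa> by (intro g1_mono) auto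
      have g1x: "g1 (1 - \<kappa>) + Q < g1 x" using c1(2)[of x] x by (simp add: c_def)
      have diff: "Q < g1 x - g1 p\<sigma>" using g1p g1x by linarith
      have I1: "((1 - \<sigma>\<^sup>2)\<^sup>2 / \<sigma>) * ((g1 x - g1 p\<sigma>) / (2 * (x - v))) \<le> integral {0..\<sigma>} (\<lambda>s. wt s * g2 (ps x v s))"
      proof -
        have "integral {0..\<sigma>} (\<lambda>s. ((1 - \<sigma>\<^sup>2)\<^sup>2 / \<sigma>) * (s * g2 (ps x v s))) \<le> integral {0..\<sigma>} (\<lambda>s. wt s * g2 (ps x v s))"
        proof (rule integral_le)
          show "(\<lambda>s. ((1 - \<sigma>\<^sup>2)\<^sup>2 / \<sigma>) * (s * g2 (ps x v s))) integrable_on {0..\<sigma>}"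
            by (rule integrable_on_mult_right, rule int_sub[OF cont_g2 _ x0(1) x(2) v(1) v1])
               (use \<sigma>1 in \<open>auto intro: continuous_intros\<close>)
          show "(\<lambda>s. wt s * g2 (ps x v s)) integrable_on {0..\<sigma>}"
            by (rule int_sub[OF cont_g2 cwt x0(1) x(2) v(1) v1]) (use \<sigma>1 in auto)
        next
          fix s assume s: "s \<in> {0..\<sigma>}"
          then have s01: "0 \<le> s" "s \<le> 1" "s \<le> \<sigma>" using \<sigma>1 by auto
          have ss: "s\<^sup>2 \<le> \<sigma>\<^sup>2" using s01 by (intro power_mono) auto
          have "ps x v s \<ge> p\<sigma>" unfolding p\<sigma>_def ps_def using ss d v by (intro diff_left_mono mult_right_mono) auto
          moreover have "ps x v s \<le> x" using ps_between[OF v(2) s01(1,2)] by simp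
          ultimately have g2p: "0 < g2 (ps x v s)" using p\<sigma> x by (intro g2_hi) auto
          have "(1 - \<sigma>\<^sup>2)\<^sup>2 \<le> wt s"
          proof -
            have "1 - \<sigma>\<^sup>2 \<le> 1 - s\<^sup>2" using ss by simp
            then have "(1 - \<sigma>\<^sup>2)\<^sup>2 \<le> (1 - s\<^sup>2)\<^sup>2" using s1 by (intro power_mono) auto
            then show ?thesis by (simp add: wt_def power2_eq_square)
          qed
          moreover have "((1 - \<sigma>\<^sup>2)\<^sup>2 / \<sigma>) * s \<le> (1 - \<sigma>\<^sup>2)\<^sup>2"
          proof -
            have "s / \<sigma> \<le> 1" using s01 \<sigma>p by simp
            then have "(1 - \<sigma>\<^sup>2)\<^sup>2 * (s / \<sigma>) \<le> (1 - \<sigma>\<^sup>2)\<^sup>2 * 1" by (intro mult_left_mono) auto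
            then show ?thesis by simp
          qed
          ultimately have "((1 - \<sigma>\<^sup>2)\<^sup>2 / \<sigma>) * s \<le> wt s" by linarith
          then have "(((1 - \<sigma>\<^sup>2)\<^sup>2 / \<sigma>) * s) * g2 (ps x v s) \<le> wt s * g2 (ps x v s)"
            using g2p by (intro mult_right_mono) auto
          then show "((1 - \<sigma>\<^sup>2)\<^sup>2 / \<sigma>) * (s * g2 (ps x v s)) \<le> wt s * g2 (ps x v s)"
            by (simp add: mult.assoc)
        qed
        moreover have "integral {0..\<sigma>} (\<lambda>s. ((1 - \<sigma>\<^sup>2)\<^sup>2 / \<sigma>) * (s * g2 (ps x v s)))
            = ((1 - \<sigma>\<^sup>2)\<^sup>2 / \<sigma>) * ((g1 x - g1 p\<sigma>) / (2 * (x - v)))"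
          using int_seg_g2[OF x0(1) x(2) v(1) v1 xv, of 0 \<sigma>] \<sigma>p \<sigma>1
          by (simp only: integral_mult_right) (simp add: p\<sigma>_def)
        ultimately show ?thesis by simp
      qed
      have "(g1 x - g1 p\<sigma>) / 2 \<le> (g1 x - g1 p\<sigma>) / (2 * (x - v))"
        using diff Qp d e0 by (intro divide_left_mono) auto
      then have "((1 - \<sigma>\<^sup>2)\<^sup>2 / \<sigma>) * ((g1 x - g1 p\<sigma>) / 2) \<le> ((1 - \<sigma>\<^sup>2)\<^sup>2 / \<sigma>) * ((g1 x - g1 p\<sigma>) / (2 * (x - v)))"
        using \<sigma>p by (intro mult_left_mono) auto
      moreover have "((1 - \<sigma>\<^sup>2)\<^sup>2 / \<sigma>) * (Q / 2) < ((1 - \<sigma>\<^sup>2)\<^sup>2 / \<sigma>) * ((g1 x - g1 p\<sigma>) / 2)"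
        using diff \<sigma>p s1 by (intro mult_strict_left_mono) auto
      moreover have "((1 - \<sigma>\<^sup>2)\<^sup>2 / \<sigma>) * (Q / 2) = M2 + 1"
        using \<sigma>p s1 by (simp add: Q_def field_simps)
      ultimately show ?thesis using split I1 I2 by linarith
    qed
  qed
qed

lemma T0_exists: assumes "0 < c" "c < 1"
  shows "\<exists>T0>0. \<forall>t. T0 \<le> t \<longrightarrow> (\<forall>p. 0 < p \<longrightarrow> p \<le> c \<longrightarrow> g1 p < 60 * t) \<and> g c < 60 * t * c"
proof -
  define a where "a = min (d2 / 2) c"
  have a: "0 < a" "a \<le> c" "a < d2" using d2 assms by (auto simp: a_def)
  have ca: "continuous_on {a..c} g1" by (rule continuous_on_subset[OF cont_g1]) (use a assms in auto)
  obtain m where m: "m \<in> {a..c}" "\<And>y. y \<in> {a..c} \<Longrightarrow> g1 y \<le> g1 m"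
    using continuous_attains_sup[OF compact_Icc _ ca] a by auto
  define B1 where "B1 = max 0 (g1 m)"
  have B1: "\<And>p. 0 < p \<Longrightarrow> p \<le> c \<Longrightarrow> g1 p \<le> B1"
  proof -
    fix p :: real assume p: "0 < p" "p \<le> c"
    show "g1 p \<le> B1"
    proof (cases "p < a")
      case True then have "g1 p < 0" using a p by (intro g1_neg) auto
      then show ?thesis by (simp add: B1_def)
    next
      case False then show ?thesis using m(2)[of p] p by (simp add: B1_def)
    qed
  qed
  have gc: "0 < g c" using g_pos assms by auto
  define T0 where "T0 = (B1 + 1) / 60 + g c / (60 * c) + 1"
  have B1p: "0 \<le> B1" by (simp add: B1_def)
  have gcc: "0 \<le> g c / (60 * c)" using gc assms by simp
  have b60: "0 \<le> (B1 + 1) / 60" using B1p by simp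
  have T0p: "0 < T0" using b60 gcc unfolding T0_def by linarith
  have T60: "60 * T0 = B1 + 1 + 60 * (g c / (60 * c)) + 60" by (simp add: T0_def field_simps)
  have gcc2: "60 * (g c / (60 * c)) = g c / c" using assms by simp
  show ?thesis
  proof (intro exI[of _ T0] conjI allI impI T0p)
    fix t p :: real assume t: "T0 \<le> t" and p: "0 < p" "p \<le> c"
    have "B1 < 60 * t" using t T60 gcc by linarith
    then show "g1 p < 60 * t" using B1[OF p] by linarith
  next
    fix t :: real assume t: "T0 \<le> t"
    have "g c / c < 60 * t" using t T60 gcc2 B1p by linarith
    then show "g c < 60 * t * c" using assms by (simp add: field_simps)
  qed
qed

lemma int_ps: "((\<lambda>s. ps x v s) has_integral (x - (x - v) / 3)) {0..1}"
proof -
  have "((\<lambda>s. ps x v s) has_integral ((\<lambda>s. x * s - (x - v) * s^3 / 3) 1 - (\<lambda>s. x * s - (x - v) * s^3 / 3) 0)) {0..1}"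
    by (rule fundamental_theorem_of_calculus)
       (auto intro!: derivative_eq_intros simp: has_real_derivative_iff_has_vector_derivative[symmetric] ps_def power2_eq_square)
  then show ?thesis by simp
qed

lemma Phi_int: assumes "0 < x" "x < 1" "0 < v" "v < 1"
  shows "Phi t x v = integral {0..1} (\<lambda>s. h t (ps x v s))"
proof -
  have i1: "(\<lambda>s. 1 * g (ps x v s)) integrable_on {0..1}"
    by (rule W_integrable[OF cont_g _ assms]) (auto intro: continuous_intros)
  have i2: "((\<lambda>s. 60 * t * ps x v s) has_integral (60 * t * (x - (x - v) / 3))) {0..1}"
    using has_integral_mult_right[OF int_ps, of "60 * t" x v] by (simp add: mult.assoc)
  have "integral {0..1} (\<lambda>s. h t (ps x v s)) = integral {0..1} (\<lambda>s. 1 * g (ps x v s) - 60 * t * ps x v s)"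
    by (simp add: h_def)
  also have "\<dots> = A x v - 60 * t * (x - (x - v) / 3)"
    using integral_diff[OF i1 has_integral_integrable[OF i2]] integral_unique[OF i2]
    by (simp add: A_def W_def)
  also have "\<dots> = Phi t x v" by (simp add: Phi_def field_simps)
  finally show ?thesis by simp
qed


end

locale ctx2 = ctx +
  fixes c T0 :: real
  assumes c_ge: "1 - e0 / 2 \<le> c" and c_lt: "c < 1"
    and convex: "\<And>x v. c \<le> x \<Longrightarrow> x < 1 \<Longrightarrow> 0 < v \<Longrightarrow> v \<le> x \<Longrightarrow> 0 < A2 x v"
    and T0_pos: "0 < T0"
    and T0_g1: "\<And>t p. T0 \<le> t \<Longrightarrow> 0 < p \<Longrightarrow> p \<le> c \<Longrightarrow> g1 p < 60 * t"
    and T0_gc: "\<And>t. T0 \<le> t \<Longrightarrow> g c < 60 * t * c"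
begin

lemma c_facts: "1/2 < c" "1 - e0 < c" "0 < c" using c_ge e0 by auto

lemma h_der: "0 < y \<Longrightarrow> y < 1 \<Longrightarrow> (h t has_real_derivative g1 y - 60 * t) (at y)"
  unfolding h_def[abs_def]
  by (rule DERIV_cong[OF DERIV_diff[OF g_der DERIV_cmult[OF DERIV_ident]]]) auto

lemma cont_h: "continuous_on {0<..<1} (h t)"
  by (intro continuous_at_imp_continuous_on ballI DERIV_isCont[OF h_der]) auto

lemma h_decr: assumes "T0 \<le> t" "0 < p" "p < q" "q \<le> c" shows "h t q < h t p"
proof (rule DERIV_neg_imp_decreasing[OF assms(3)])
  fix y assume y: "p \<le> y" "y \<le> q"
  then have "0 < y" "y < 1" "y \<le> c" using assms c_lt by auto
  then show "\<exists>d. (h t has_real_derivative d) (at y) \<and> d < 0"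
    using h_der T0_g1[OF assms(1)] by force
qed

lemma h_c_neg: assumes "T0 \<le> t" shows "h t c < 0"
proof -
  have "g c < 60 * t * c" by (rule T0_gc[OF assms])
  then show ?thesis by (simp add: h_def)
qed

lemma h_pos_right: assumes t: "T0 \<le> t" and v: "c < v" "v \<le> p" "p < 1" and hv: "0 < h t v"
  shows "0 < h t p"
proof -
  obtain z where z: "c < z" "z < v" "h t v - h t c = (v - c) * (g1 z - 60 * t)"
    using MVT2[OF v(1), of "h t" "\<lambda>y. g1 y - 60 * t"] h_der c_facts v by force
  have "0 < (v - c) * (g1 z - 60 * t)" using z(3) hv h_c_neg[OF t] by linarith
  then have gz: "0 < g1 z - 60 * t" using v by (simp add: zero_less_mult_iff)
  have "h t v \<le> h t p"
  proof (rule DERIV_nonneg_imp_nondecreasing[OF v(2)])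
    fix y assume y: "v \<le> y" "y \<le> p"
    have "g1 z \<le> g1 y" using z c_facts y v by (intro g1_mono) auto
    then show "\<exists>d. (h t has_real_derivative d) (at y) \<and> 0 \<le> d"
      using h_der[of y t] y v c_facts gz by (intro exI[of _ "g1 y - 60 * t"]) auto
  qed
  then show ?thesis using hv by simp
qed

lemma cont_Phi: "0 < v \<Longrightarrow> v < 1 \<Longrightarrow> continuous_on {0<..<1} (\<lambda>x. Phi t x v)"
  by (intro continuous_at_imp_continuous_on ballI DERIV_isCont[OF Phi_der_x]) auto

lemma cont_E: assumes "0 < v" "v < 1" shows "continuous_on {0<..<1} (\<lambda>x. E t x v)"
proof -
  have "continuous_on {0<..<1} (\<lambda>x. N x v)"
    using assms by (intro continuous_at_imp_continuous_on ballI DERIV_isCont[OF N_der_x]) auto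
  then show ?thesis unfolding E_def Gf_def Pf_def by (intro continuous_intros)
qed

lemma Phi_decr: assumes t: "T0 \<le> t" and v: "0 < v" "v \<le> x1" and x: "x1 < x2" "x2 \<le> c"
  shows "Phi t x2 v < Phi t x1 v"
proof -
  have x01: "0 < x1" "x1 < 1" "0 < x2" "x2 < 1" "v < 1" using v x c_lt by auto
  have i1: "(\<lambda>s. h t (ps x1 v s)) integrable_on {0..1}"
    using W_integrable[OF cont_h _ x01(1,2) v(1) x01(5), of "\<lambda>s. 1"] by simp
  have i2: "(\<lambda>s. h t (ps x2 v s)) integrable_on {0..1}"
    using W_integrable[OF cont_h _ x01(3,4) v(1) x01(5), of "\<lambda>s. 1"] by simp
  have "0 < integral {0..1} (\<lambda>s. h t (ps x1 v s) - h t (ps x2 v s))"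
  proof (rule integral_pos_lemma)
    show "continuous_on {0..1} (\<lambda>s. h t (ps x1 v s) - h t (ps x2 v s))"
      using cont_ps_s[OF cont_h _ x01(1,2) v(1) x01(5), of "\<lambda>s. 1"]
            cont_ps_s[OF cont_h _ x01(3,4) v(1) x01(5), of "\<lambda>s. 1"]
      by (auto intro!: continuous_intros)
  next
    fix s :: real assume s: "0 \<le> s" "s \<le> 1"
    show "0 \<le> h t (ps x1 v s) - h t (ps x2 v s)"
    proof (cases "s = 1")
      case True then show ?thesis by simp
    next
      case False
      then have s1: "s\<^sup>2 < 1" using s by (simp add: power_less_one_iff abs_square_less_1)
      have "ps x2 v s - ps x1 v s = (1 - s\<^sup>2) * (x2 - x1)" by (simp add: ps_def algebra_simps)
      moreover have "0 < (1 - s\<^sup>2) * (x2 - x1)" using s1 x by simp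
      ultimately have "ps x1 v s < ps x2 v s" by linarith
      moreover have "0 < ps x1 v s" using ps_in[OF x01(1,2) v(1) x01(5) s] by simp
      moreover have "ps x2 v s \<le> c" using ps_between[of v x2 s] s v x by auto
      ultimately show ?thesis using h_decr[OF t] by fastforce
    qed
  next
    fix s :: real assume s: "0 \<le> s" "s \<le> 1/2"
    have s1: "s\<^sup>2 < 1"
    proof -
      have "s\<^sup>2 \<le> (1/2)\<^sup>2" using s by (intro power_mono) auto
      then show ?thesis by (simp add: power2_eq_square)
    qed
    have "ps x2 v s - ps x1 v s = (1 - s\<^sup>2) * (x2 - x1)" by (simp add: ps_def algebra_simps)
    moreover have "0 < (1 - s\<^sup>2) * (x2 - x1)" using s1 x by simp
    ultimately have "ps x1 v s < ps x2 v s" by linarith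
    moreover have "0 < ps x1 v s" using ps_in[OF x01(1,2) v(1) x01(5)] s by simp
    moreover have "ps x2 v s \<le> c" using ps_between[of v x2 s] s v x by auto
    ultimately show "0 < h t (ps x1 v s) - h t (ps x2 v s)" using h_decr[OF t] by fastforce
  qed
  also have "\<dots> = integral {0..1} (\<lambda>s. h t (ps x1 v s)) - integral {0..1} (\<lambda>s. h t (ps x2 v s))"
    by (rule integral_diff[OF i1 i2])
  finally show ?thesis using Phi_int[OF x01(1,2) v(1) x01(5)] Phi_int[OF x01(3,4) v(1) x01(5)] by simp
qed

lemma Phi_pos_h: assumes v: "0 < v" "v \<le> x" "x < 1" and hp: "\<And>p. v \<le> p \<Longrightarrow> p \<le> x \<Longrightarrow> 0 < h t p"
  shows "0 < Phi t x v"
proof -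
  have x01: "0 < x" "v < 1" using v by auto
  have "0 < integral {0..1} (\<lambda>s. h t (ps x v s))"
  proof (rule integral_pos_lemma)
    show "continuous_on {0..1} (\<lambda>s. h t (ps x v s))"
      using cont_ps_s[OF cont_h _ x01(1) v(3) v(1) x01(2), of "\<lambda>s. 1"] by simp
  next
    fix s :: real assume s: "0 \<le> s" "s \<le> 1"
    then show "0 \<le> h t (ps x v s)" using ps_between[OF v(2) s] hp less_imp_le by blast
  next
    fix s :: real assume s: "0 \<le> s" "s \<le> 1/2"
    then show "0 < h t (ps x v s)" using ps_between[OF v(2)] hp by simp
  qed
  then show ?thesis using Phi_int[OF x01(1) v(3) v(1) x01(2)] by simp
qed

lemma Phi1_incr: assumes "c \<le> a" "a < b" "b < 1" "0 < v" "v \<le> a"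
  shows "A1 a v - 40 * t < A1 b v - 40 * t"
proof (rule DERIV_pos_imp_increasing[OF assms(2)])
  fix x assume x: "a \<le> x" "x \<le> b"
  then have "0 < x" "x < 1" "c \<le> x" "v \<le> x" "v < 1" using assms c_facts by auto
  then show "\<exists>y. ((\<lambda>x. A1 x v - 40 * t) has_real_derivative y) (at x) \<and> 0 < y"
    using Phi1_der_x[of v x t] convex assms(4) by blast
qed

lemma slope: assumes "c \<le> a" "a < b" "b < d" "d < 1" "0 < v" "v \<le> a"
  shows "(Phi t b v - Phi t a v) * (d - b) < (Phi t d v - Phi t b v) * (b - a)"
proof -
  have der: "\<And>x. a \<le> x \<Longrightarrow> x \<le> d \<Longrightarrow> ((\<lambda>x. Phi t x v) has_real_derivative A1 x v - 40 * t) (at x)"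
    using assms c_facts by (intro Phi_der_x) auto
  obtain z1 where z1: "a < z1" "z1 < b" "Phi t b v - Phi t a v = (b - a) * (A1 z1 v - 40 * t)"
    using MVT2[OF assms(2), of "\<lambda>x. Phi t x v" "\<lambda>x. A1 x v - 40 * t"] der assms by force
  obtain z2 where z2: "b < z2" "z2 < d" "Phi t d v - Phi t b v = (d - b) * (A1 z2 v - 40 * t)"
    using MVT2[OF assms(3), of "\<lambda>x. Phi t x v" "\<lambda>x. A1 x v - 40 * t"] der assms by force
  have lt: "A1 z1 v - 40 * t < A1 z2 v - 40 * t"
    using z1 z2 assms by (intro Phi1_incr) auto
  have pos: "0 < (b - a) * (d - b)" using assms by simp
  have "(Phi t b v - Phi t a v) * (d - b) = (A1 z1 v - 40 * t) * ((b - a) * (d - b))"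
    using z1(3) by simp
  also have "\<dots> < (A1 z2 v - 40 * t) * ((b - a) * (d - b))"
    using lt pos by (intro mult_strict_right_mono) auto
  also have "\<dots> = (Phi t d v - Phi t b v) * (b - a)" using z2(3) by simp
  finally show ?thesis .
qed

lemma sgn1: assumes "c \<le> a" "a < x" "x < u" "u < 1" "0 < v" "v \<le> a"
    and "Phi t a v \<le> 0" "Phi t u v = 0"
  shows "Phi t x v < 0"
proof (rule ccontr)
  assume "\<not> Phi t x v < 0"
  then have p: "0 \<le> Phi t x v" by simp
  have s: "(Phi t x v - Phi t a v) * (u - x) < (Phi t u v - Phi t x v) * (x - a)"
    using assms by (intro slope) auto
  have "(Phi t u v - Phi t x v) * (x - a) \<le> 0" using p assms by (simp add: mult_nonpos_nonneg)
  moreover have "0 \<le> (Phi t x v - Phi t a v) * (u - x)" using p assms by simp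
  ultimately show False using s by linarith
qed

lemma sgn2: assumes "c \<le> a" "a < u" "u < x" "x < 1" "0 < v" "v \<le> a"
    and "Phi t a v \<le> 0" "Phi t u v = 0"
  shows "0 < Phi t x v"
proof (rule ccontr)
  assume "\<not> 0 < Phi t x v"
  then have p: "Phi t x v \<le> 0" by simp
  have s: "(Phi t u v - Phi t a v) * (x - u) < (Phi t x v - Phi t u v) * (u - a)"
    using assms by (intro slope) auto
  have "(Phi t x v - Phi t u v) * (u - a) \<le> 0" using p assms by (simp add: mult_nonpos_nonneg)
  moreover have "0 \<le> (Phi t u v - Phi t a v) * (x - u)" using assms by (intro mult_nonneg_nonneg) auto
  ultimately show False using s by linarith
qed

lemma sgn3: assumes "c \<le> a" "a < y" "y < u" "u < 1" "0 < v" "v \<le> a"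
    and "Phi t y v = 0" "Phi t u v = 0"
  shows "0 < Phi t a v"
proof (rule ccontr)
  assume "\<not> 0 < Phi t a v"
  then have p: "Phi t a v \<le> 0" by simp
  have s: "(Phi t y v - Phi t a v) * (u - y) < (Phi t u v - Phi t y v) * (y - a)"
    using assms by (intro slope) auto
  have "0 \<le> (Phi t y v - Phi t a v) * (u - y)" using p assms by (intro mult_nonneg_nonneg) auto
  moreover have "(Phi t u v - Phi t y v) * (y - a) = 0" using assms by simp
  ultimately show False using s by linarith
qed

lemma E_rolle: assumes "0 < v" "v < u" "u < 1" "E t u v = 0"
  shows "\<exists>y. v < y \<and> y < u \<and> Phi t y v = 0"
proof -
  have cE: "continuous_on {v..u} (\<lambda>x. E t x v)"
    by (rule continuous_on_subset[OF cont_E]) (use assms in auto)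
  have "\<exists>l z. v < z \<and> z < u \<and> ((\<lambda>x. E t x v) has_real_derivative l) (at z) \<and>
      E t u v - E t v v = (u - v) * l"
  proof (rule MVT[OF assms(2) cE])
    fix x assume x: "v < x" "x < u"
    have "((\<lambda>x. E t x v) has_real_derivative sqrt (x - v) * Phi t x v) (at x)"
      using x assms by (intro E_der_x) auto
    then show "(\<lambda>x. E t x v) differentiable (at x)" using real_differentiable_def by blast
  qed
  then obtain l z where z: "v < z" "z < u" "((\<lambda>x. E t x v) has_real_derivative l) (at z)"
      "E t u v - E t v v = (u - v) * l" by blast
  have l0: "l = 0" using z(4) assms E_diag by simp
  have "((\<lambda>x. E t x v) has_real_derivative sqrt (z - v) * Phi t z v) (at z)"
    using z assms by (intro E_der_x) auto
  then have "l = sqrt (z - v) * Phi t z v" by (rule DERIV_unique[OF z(3)])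
  then have "sqrt (z - v) * Phi t z v = 0" using l0 by simp
  moreover have "sqrt (z - v) \<noteq> 0" using z by simp
  ultimately show ?thesis using z by auto
qed

lemma E_incr: assumes "0 < v" "v \<le> a" "a < b" "b < 1" and p: "\<And>x. a < x \<Longrightarrow> x < b \<Longrightarrow> 0 < Phi t x v"
  shows "E t a v < E t b v"
proof (rule DERIV_pos_imp_increasing_open[OF assms(3)])
  fix x assume x: "a < x" "x < b"
  have "((\<lambda>x. E t x v) has_real_derivative sqrt (x - v) * Phi t x v) (at x)"
    using x assms by (intro E_der_x) auto
  moreover have "0 < sqrt (x - v) * Phi t x v" using p[OF x] x assms by simp
  ultimately show "\<exists>y. ((\<lambda>x. E t x v) has_real_derivative y) (at x) \<and> 0 < y" by blast
next
  show "continuous_on {a..b} (\<lambda>x. E t x v)"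
    by (rule continuous_on_subset[OF cont_E]) (use assms in auto)
qed

lemma E_decr: assumes "0 < v" "v \<le> a" "a < b" "b < 1" and p: "\<And>x. a < x \<Longrightarrow> x < b \<Longrightarrow> Phi t x v < 0"
  shows "E t b v < E t a v"
proof (rule DERIV_neg_imp_decreasing_open[OF assms(3)])
  fix x assume x: "a < x" "x < b"
  have "((\<lambda>x. E t x v) has_real_derivative sqrt (x - v) * Phi t x v) (at x)"
    using x assms by (intro E_der_x) auto
  moreover have "sqrt (x - v) * Phi t x v < 0" using p[OF x] x assms by (simp add: mult_pos_neg)
  ultimately show "\<exists>y. ((\<lambda>x. E t x v) has_real_derivative y) (at x) \<and> y < 0" by blast
next
  show "continuous_on {a..b} (\<lambda>x. E t x v)"
    by (rule continuous_on_subset[OF cont_E]) (use assms in auto)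
qed

end

context ctx2 begin

definition sol :: "real \<Rightarrow> real \<Rightarrow> real \<Rightarrow> bool" where
  "sol t u v \<longleftrightarrow> 0 < v \<and> v < u \<and> u < 1 \<and> Phi t u v = 0 \<and> E t u v = 0"

lemma struct_sol:
  assumes t: "T0 \<le> t" and s: "sol t u v"
  shows "v < c" "c < u" "0 < h t v"
    "\<And>x. v < x \<Longrightarrow> x < 1 \<Longrightarrow> x \<noteq> u \<Longrightarrow> 0 < E t x v"
    "\<And>x. u < x \<Longrightarrow> x < 1 \<Longrightarrow> 0 < Phi t x v"
proof -
  have v: "0 < v" "v < u" "u < 1" "Phi t u v = 0" "E t u v = 0" using s by (auto simp: sol_def)
  obtain y where y: "v < y" "y < u" "Phi t y v = 0" using E_rolle[OF v(1,2,3,5)] by blast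
  show vc: "v < c"
  proof (rule ccontr)
    assume "\<not> v < c"
    then have cv: "c \<le> v" by simp
    have "0 < Phi t v v" using cv y v by (intro sgn3[of v y u]) auto
    then have hv: "0 < h t v" using Phi_diag v c_lt cv by simp
    have cv': "c < v" using cv hv h_c_neg[OF t] by (cases "c = v") auto
    have "0 < Phi t u v"
      using v y by (intro Phi_pos_h) (auto intro: h_pos_right[OF t cv' _ _ hv])
    then show False using v by simp
  qed
  show cu: "c < u"
  proof (rule ccontr)
    assume "\<not> c < u"
    then have "Phi t u v < Phi t y v" using y v by (intro Phi_decr[OF t]) auto
    then show False using y v by simp
  qed
  have P: "(\<forall>x. v \<le> x \<longrightarrow> x < y \<longrightarrow> 0 < Phi t x v) \<and> (\<forall>x. y < x \<longrightarrow> x < u \<longrightarrow> Phi t x v < 0)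
      \<and> (\<forall>x. u < x \<longrightarrow> x < 1 \<longrightarrow> 0 < Phi t x v)"
  proof (cases "y \<le> c")
    case True
    have Pc: "Phi t c v \<le> 0"
    proof (cases "y = c")
      case True then show ?thesis using y by simp
    next
      case False
      then have "Phi t c v < Phi t y v" using \<open>y \<le> c\<close> y v by (intro Phi_decr[OF t]) auto
      then show ?thesis using y by simp
    qed
    have P1: "0 < Phi t x v" if "v \<le> x" "x < y" for x
      using Phi_decr[OF t v(1) that(1) that(2) True] y by simp
    have P2: "Phi t x v < 0" if "y < x" "x < u" for x
    proof (cases "x \<le> c")
      case True then show ?thesis using Phi_decr[OF t v(1) less_imp_le[OF y(1)] that(1) True] y by simp
    next
      case False then show ?thesis using that v vc Pc by (intro sgn1[of c x u]) auto
    qed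
    have P3: "0 < Phi t x v" if "u < x" "x < 1" for x
      using that v vc Pc cu by (intro sgn2[of c u x]) auto
    show ?thesis using P1 P2 P3 by blast
  next
    case False
    then have cy: "c < y" by simp
    have Pc: "0 < Phi t c v" using cy y v vc by (intro sgn3[of c y u]) auto
    have P1: "0 < Phi t x v" if "v \<le> x" "x < y" for x
    proof (cases "c \<le> x")
      case True then show ?thesis using that y v by (intro sgn3[of x y u]) auto
    next
      case False
      then have "Phi t c v < Phi t x v" using that v by (intro Phi_decr[OF t]) auto
      then show ?thesis using Pc by simp
    qed
    have P2: "Phi t x v < 0" if "y < x" "x < u" for x
      using that y v cy vc by (intro sgn1[of y x u]) auto
    have P3: "0 < Phi t x v" if "u < x" "x < 1" for x
      using that y v cy vc by (intro sgn2[of y u x]) auto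
    show ?thesis using P1 P2 P3 by blast
  qed
  show "0 < h t v" using P y v Phi_diag[of v t] by auto
  show "\<And>x. u < x \<Longrightarrow> x < 1 \<Longrightarrow> 0 < Phi t x v" using P by blast
  fix x assume x: "v < x" "x < 1" "x \<noteq> u"
  show "0 < E t x v"
  proof (cases "x < y")
    case True
    have "E t v v < E t x v" using x v True P by (intro E_incr) auto
    then show ?thesis using E_diag by simp
  next
    case False
    show ?thesis
    proof (cases "x < u")
      case True
      have "E t u v < E t x v" using x v True False P by (intro E_decr) auto
      then show ?thesis using v by simp
    next
      case False
      then have "u < x" using x by simp
      then have "E t u v < E t x v" using x v P by (intro E_incr) auto
      then show ?thesis using v by simp
    qed
  qed
qed

lemma E_decr_v: assumes t: "T0 \<le> t" and w: "0 < w1" "w1 < w2" "w2 < x" "x < 1" "w2 \<le> c" and hw: "0 < h t w2"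
  shows "E t x w2 < E t x w1"
proof (rule DERIV_neg_imp_decreasing[OF w(2)])
  fix w assume ww: "w1 \<le> w" "w \<le> w2"
  have hp: "0 < h t w"
  proof (cases "w = w2")
    case True then show ?thesis using hw by simp
  next
    case False then show ?thesis using h_decr[OF t, of w w2] ww w hw by simp
  qed
  have "((\<lambda>v. E t x v) has_real_derivative - sqrt (x - w) * h t w) (at w)"
    using ww w by (intro E_der_v) auto
  moreover have "- sqrt (x - w) * h t w < 0" using hp ww w by simp
  ultimately show "\<exists>y. ((\<lambda>v. E t x v) has_real_derivative y) (at w) \<and> y < 0" by blast
qed

lemma uniq_aux: assumes t: "T0 \<le> t" and s1: "sol t u v" and s2: "sol t u' v'" and vv: "v \<le> v'"
  shows "u = u' \<and> v = v'"
proof (cases "v = v'")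
  case True
  show ?thesis
  proof (rule ccontr)
    assume "\<not> ?thesis"
    then have "u' \<noteq> u" using True by simp
    then have "0 < E t u' v" using struct_sol(4)[OF t s1, of u'] s2 True by (auto simp: sol_def)
    then show False using s2 True by (simp add: sol_def)
  qed
next
  case False
  then have vv': "v < v'" using vv by simp
  have v'c: "v' < c" using struct_sol(1)[OF t s2] .
  have cu: "c < u" using struct_sol(2)[OF t s1] .
  have hv': "0 < h t v'" using struct_sol(3)[OF t s2] .
  have "E t u v' < E t u v"
    using s1 vv' v'c cu hv' by (intro E_decr_v[OF t]) (auto simp: sol_def)
  then have neg: "E t u v' < 0" using s1 by (simp add: sol_def)
  have "0 \<le> E t u v'"
  proof (cases "u = u'")
    case True then show ?thesis using s2 by (simp add: sol_def)
  next
    case False then show ?thesis using struct_sol(4)[OF t s2, of u] v'c cu s1 by (auto simp: sol_def)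
  qed
  then show ?thesis using neg by simp
qed

lemma uniq: assumes t: "T0 \<le> t" and s1: "sol t u v" and s2: "sol t u' v'"
  shows "u = u' \<and> v = v'"
  using uniq_aux[OF t s1 s2] uniq_aux[OF t s2 s1] by (cases "v \<le> v'") auto

end

context ctx2 begin

lemma N_cont2: "continuous_on ({0<..<1} \<times> {0<..<1}) (\<lambda>z. N (fst z) (snd z))"
proof -
  have "continuous_on ({0<..<1} \<times> {0<..<1}) (\<lambda>z. integral (cbox 0 1) (\<lambda>s. s\<^sup>2 * g (ps (fst z) (snd z) s)))"
  proof (rule integral_continuous_on_param)
    have cw: "continuous_on {0..1} (\<lambda>s::real. s\<^sup>2)" by (intro continuous_intros)
    show "continuous_on (({0<..<1} \<times> {0<..<1}) \<times> cbox 0 1) (\<lambda>(z, s). s\<^sup>2 * g (ps (fst z) (snd z) s))"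
      using cont_ps_xv[OF cont_g cw] by (simp add: cbox_interval)
  qed
  then show ?thesis by (simp add: N_def W_def cbox_interval)
qed

lemma E_cont2: "continuous_on ({0<..<1} \<times> {0<..<1}) (\<lambda>z. E t (fst z) (snd z))"
  unfolding E_def Gf_def Pf_def by (intro continuous_intros N_cont2)

lemma Pf_le5: assumes "0 < v" "v < x" "x < 1" shows "Pf x v \<le> 5"
proof -
  have a: "0 \<le> x - v" "x - v \<le> 1" using assms by auto
  have b: "0 \<le> sqrt (x - v)" "sqrt (x - v) \<le> 1" using a by auto
  have "(x - v) * sqrt (x - v) \<le> 1 * 1" using a b by (intro mult_mono) auto
  moreover have "0 \<le> 2 * x + 3 * v" "2 * x + 3 * v \<le> 5" using assms by auto
  ultimately have "(x - v) * sqrt (x - v) * (2 * x + 3 * v) \<le> 1 * 5"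
    using a b by (intro mult_mono) auto
  then show ?thesis by (simp add: Pf_def)
qed

lemma Pf_pos: assumes "v < x" "0 < v" shows "0 < Pf x v"
  using assms by (simp add: Pf_def)

lemma exist: "\<exists>T1\<ge>T0. \<forall>t\<ge>T1. \<exists>u v. sol t u v"
proof -
  define vb where "vb = c / 2"
  have vb: "0 < vb" "vb < c" using c_facts c_lt by (auto simp: vb_def)
  have Pb: "0 < Pf c vb" using vb by (intro Pf_pos) auto
  define T1 where "T1 = max T0 (Gf c vb / (8 * Pf c vb) + 1)"
  show ?thesis
  proof (rule exI[of _ T1], intro conjI allI impI)
    show "T0 \<le> T1" by (simp add: T1_def)
    fix t assume tT: "T1 \<le> t"
    have t0: "T0 \<le> t" using tT by (simp add: T1_def)
    have tp: "0 < t" using t0 T0_pos by simp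
    have Ecb: "E t c vb < 0"
    proof -
      have "Gf c vb / (8 * Pf c vb) < t" using tT by (simp add: T1_def)
      then have "Gf c vb < t * (8 * Pf c vb)" using Pb by (simp add: divide_less_eq)
      then show ?thesis by (simp add: E_def algebra_simps)
    qed
    define K where "K = f (3 * c / 4) + 80 * t / sqrt (c / 2)"
    obtain a where a: "0 < a" "\<And>x. 0 < x \<Longrightarrow> x < a \<Longrightarrow> K < f x" using f_top[of K] by blast
    define v1 where "v1 = min a vb / 2"
    have v1: "0 < v1" "v1 < vb" "K < f v1" using a vb by (auto simp: v1_def)
    have Ev1: "0 < E t x v1" if x: "c \<le> x" "x < 1" for x
    proof -
      have xv: "0 < v1" "v1 < x" "x < 1" using v1 vb x by auto
      have Gg: "sqrt (x - v1) * (1/2) * (f v1 - f (ps x v1 (1/2))) \<le> Gf x v1"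
        by (rule G_ge[OF xv]) auto
      have pe: "ps x v1 (1/2) = (3 * x + v1) / 4" by (simp add: ps_def power2_eq_square field_simps)
      have p: "3 * c / 4 \<le> ps x v1 (1/2)" "ps x v1 (1/2) < 1"
        unfolding pe using x xv by auto
      have fp: "f (ps x v1 (1/2)) \<le> f (3 * c / 4)" using p c_facts c_lt by (intro f_mono) auto
      have sq: "sqrt (c / 2) \<le> sqrt (x - v1)" using x v1 vb by (intro real_sqrt_le_mono) (auto simp: vb_def)
      have sc: "0 < sqrt (c / 2)" using c_facts c_lt by simp
      have kk: "80 * t / sqrt (c / 2) < f v1 - f (ps x v1 (1/2))" using v1 fp by (simp add: K_def)
      have kp: "0 < 80 * t / sqrt (c / 2)" using tp sc by simp
      have "sqrt (c / 2) * (1/2) * (80 * t / sqrt (c / 2)) < sqrt (x - v1) * (1/2) * (f v1 - f (ps x v1 (1/2)))"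
      proof (rule mult_le_less_imp_less)
        show "sqrt (c / 2) * (1/2) \<le> sqrt (x - v1) * (1/2)" using sq by simp
      qed (use sc kk kp in auto)
      moreover have "sqrt (c / 2) * (1/2) * (80 * t / sqrt (c / 2)) = 40 * t" using sc by simp
      moreover have "8 * t * Pf x v1 \<le> 8 * t * 5" using Pf_le5[OF xv] tp by simp
      ultimately show ?thesis using Gg by (simp add: E_def)
    qed
    obtain b0 where b0: "b0 < 1" "\<And>x. b0 < x \<Longrightarrow> x < 1 \<Longrightarrow> f x < f vb - 120 * t"
      using f_bot[of "f vb - 120 * t"] by blast
    define b where "b = (max c b0 + 1) / 2"
    have b: "c < b" "b < 1" "b0 < b" using b0 c_lt by (auto simp: b_def)
    have Phib: "0 < Phi t x v" if x: "b \<le> x" "x < 1" and v: "v1 \<le> v" "v \<le> vb" for x v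
    proof -
      have xv: "0 < v" "v < x" "x < 1" using x v v1 vb b by auto
      have fx: "f x < f vb - 120 * t" using b0(2)[of x] x b by simp
      have fv: "f vb \<le> f v" using v xv vb c_lt by (intro f_mono) auto
      have d: "0 < x - v" "x - v \<le> 1" using xv by auto
      have n: "0 < f v - f x" using fx fv tp by simp
      have "(f v - f x) / 2 \<le> (f v - f x) / (2 * (x - v))"
        using n d by (intro divide_left_mono) auto
      then have "(f v - f x) / 2 \<le> A x v" using A_ge[OF xv] by linarith
      moreover have "60 * t < (f v - f x) / 2" using fx fv by simp
      moreover have "20 * t * (2 * x + v) \<le> 20 * t * 3" using xv tp by (intro mult_left_mono) auto
      ultimately show ?thesis by (simp add: Phi_def)
    qed
    define m where "m = (\<lambda>v. Inf ((\<lambda>x. E t x v) ` {c..b}))"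
    have cEv: "continuous_on {c..b} (\<lambda>x. E t x v)" if "0 < v" "v < 1" for v
      by (rule continuous_on_subset[OF cont_E[OF that]]) (use c_facts c_lt b in auto)
    have mmin: "\<exists>x0\<in>{c..b}. E t x0 v = m v \<and> (\<forall>x\<in>{c..b}. m v \<le> E t x v)" if vv: "0 < v" "v < 1" for v
    proof -
      obtain x0 where x0: "x0 \<in> {c..b}" "\<And>x. x \<in> {c..b} \<Longrightarrow> E t x0 v \<le> E t x v"
        using continuous_attains_inf[OF compact_Icc _ cEv[OF vv]] b by auto
      have "m v = E t x0 v" unfolding m_def by (rule cInf_eq_minimum) (use x0 in auto)
      then show ?thesis using x0 by auto
    qed
    have mcont: "continuous_on {v1..vb} m"
    proof -
      have K: "compact ({c..b} \<times> {v1..vb})" by (intro compact_Times compact_Icc)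
      have cK: "continuous_on ({c..b} \<times> {v1..vb}) (\<lambda>z. E t (fst z) (snd z))"
        by (rule continuous_on_subset[OF E_cont2]) (use c_facts c_lt b v1 vb in auto)
      have uc: "uniformly_continuous_on ({c..b} \<times> {v1..vb}) (\<lambda>z. E t (fst z) (snd z))"
        by (rule compact_uniformly_continuous[OF cK K])
      show ?thesis unfolding continuous_on_iff
      proof (intro ballI allI impI)
        fix v e :: real assume v: "v \<in> {v1..vb}" and e: "0 < e"
        obtain d where d: "0 < d" "\<And>z z'. z \<in> {c..b} \<times> {v1..vb} \<Longrightarrow> z' \<in> {c..b} \<times> {v1..vb} \<Longrightarrow>
            dist z' z < d \<Longrightarrow> dist (E t (fst z') (snd z')) (E t (fst z) (snd z)) < e"
          using uc e unfolding uniformly_continuous_on_def by metis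
        show "\<exists>d>0. \<forall>v'\<in>{v1..vb}. dist v' v < d \<longrightarrow> dist (m v') (m v) < e"
        proof (intro exI[of _ d] conjI ballI impI d(1))
          fix v' assume v': "v' \<in> {v1..vb}" and dv: "dist v' v < d"
          have close: "\<bar>E t x v' - E t x v\<bar> < e" if "x \<in> {c..b}" for x
          proof -
            have "dist (x, v') (x, v) < d" using dv by (simp add: dist_Pair_Pair)
            then show ?thesis using d(2)[of "(x, v)" "(x, v')"] that v v' by (auto simp: dist_real_def)
          qed
          have v01: "0 < v" "v < 1" "0 < v'" "v' < 1" using v v' v1 vb c_facts c_lt by auto
          obtain x1 where x1: "x1 \<in> {c..b}" "E t x1 v = m v" "\<forall>x\<in>{c..b}. m v \<le> E t x v" using mmin[OF v01(1,2)] by blast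
          obtain x2 where x2: "x2 \<in> {c..b}" "E t x2 v' = m v'" "\<forall>x\<in>{c..b}. m v' \<le> E t x v'" using mmin[OF v01(3,4)] by blast
          have "m v' < m v + e" using x2(3) x1 close[OF x1(1)] by force
          moreover have "m v < m v' + e" using x1(3) x2 close[OF x2(1)] by force
          ultimately show "dist (m v') (m v) < e" by (simp add: dist_real_def abs_less_iff)
        qed
      qed
    qed
    have m1: "0 < m v1"
    proof -
      obtain x1 where "x1 \<in> {c..b}" "E t x1 v1 = m v1" using mmin[of v1] v1 vb c_facts c_lt by auto
      then show ?thesis using Ev1[of x1] b by auto
    qed
    have mb: "m vb < 0"
    proof -
      obtain x1 where "x1 \<in> {c..b}" "E t x1 vb = m vb" "\<forall>x\<in>{c..b}. m vb \<le> E t x vb"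
        using mmin[of vb] vb c_facts c_lt by auto
      then have "m vb \<le> E t c vb" using b by auto
      then show ?thesis using Ecb by simp
    qed
    obtain v0 where v0: "v1 \<le> v0" "v0 \<le> vb" "m v0 = 0"
      using IVT2'[of m vb 0 v1, OF _ _ _ mcont] m1 mb v1 by auto
    have v0': "0 < v0" "v0 < c" "v0 < 1" using v0 v1 vb c_facts c_lt by auto
    obtain x0 where x0: "x0 \<in> {c..b}" "E t x0 v0 = 0" "\<And>x. x \<in> {c..b} \<Longrightarrow> 0 \<le> E t x v0"
      using mmin[OF v0'(1,3)] v0 by auto
    have x0b: "x0 \<noteq> b"
    proof
      assume xb: "x0 = b"
      have "((\<lambda>x. E t x v0) has_real_derivative sqrt (b - v0) * Phi t b v0) (at b)"
        using v0' b c_facts c_lt by (intro E_der_x) auto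
      moreover have "0 < sqrt (b - v0) * Phi t b v0" using Phib[of b v0] v0 v0' b by simp
      ultimately obtain d where d: "0 < d" "\<And>h. 0 < h \<Longrightarrow> h < d \<Longrightarrow> E t (b - h) v0 < E t b v0"
        using DERIV_pos_inc_left by blast
      define hh where "hh = min (d / 2) ((b - c) / 2)"
      have h1a: "hh \<le> d / 2" unfolding hh_def by (rule min.cobounded1)
      have h1b: "hh \<le> (b - c) / 2" unfolding hh_def by (rule min.cobounded2)
      have h1c: "0 < hh" unfolding hh_def using d b by simp
      note h1 = h1a h1b h1c
      have hh: "0 < hh" "hh < d" "b - hh \<in> {c..b}" using h1 d b by auto
      then show False using d(2)[of hh] x0 xb by fastforce
    qed
    have x0c: "x0 \<noteq> c"
    proof
      assume xc: "x0 = c"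
      obtain y where y: "v0 < y" "y < c" "Phi t y v0 = 0"
        using E_rolle[of v0 c t] v0' c_facts c_lt x0 xc by auto
      have "Phi t c v0 < Phi t y v0" using y v0' by (intro Phi_decr[OF t0]) auto
      then have pn: "Phi t c v0 < 0" using y by simp
      have "((\<lambda>x. E t x v0) has_real_derivative sqrt (c - v0) * Phi t c v0) (at c)"
        using v0' c_facts c_lt by (intro E_der_x) auto
      moreover have "sqrt (c - v0) * Phi t c v0 < 0" using pn v0' by (simp add: mult_pos_neg)
      ultimately obtain d where d: "0 < d" "\<And>h. 0 < h \<Longrightarrow> h < d \<Longrightarrow> E t (c + h) v0 < E t c v0"
        using DERIV_neg_dec_right by blast
      define hh where "hh = min (d / 2) ((b - c) / 2)"
      have h1a: "hh \<le> d / 2" unfolding hh_def by (rule min.cobounded1)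
      have h1b: "hh \<le> (b - c) / 2" unfolding hh_def by (rule min.cobounded2)
      have h1c: "0 < hh" unfolding hh_def using d b by simp
      note h1 = h1a h1b h1c
      have hh: "0 < hh" "hh < d" "c + hh \<in> {c..b}" using h1 d b by auto
      then show False using d(2)[of hh] x0 xc by fastforce
    qed
    have x0i: "c < x0" "x0 < b" using x0 x0b x0c by auto
    have der: "((\<lambda>x. E t x v0) has_real_derivative sqrt (x0 - v0) * Phi t x0 v0) (at x0)"
      using v0' x0i b by (intro E_der_x) auto
    have "sqrt (x0 - v0) * Phi t x0 v0 = 0"
    proof (rule DERIV_local_min[OF der, of "min (x0 - c) (b - x0)"])
      show "0 < min (x0 - c) (b - x0)" using x0i by simp
      show "\<forall>y. \<bar>x0 - y\<bar> < min (x0 - c) (b - x0) \<longrightarrow> E t x0 v0 \<le> E t y v0"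
        using x0 by (auto simp: abs_less_iff)
    qed
    then have "Phi t x0 v0 = 0" using x0i v0' by simp
    then have "sol t x0 v0" using x0 x0i v0' b by (auto simp: sol_def)
    then show "\<exists>u v. sol t u v" by blast
  qed
qed

end

context ctx2 begin

lemma sol_R: assumes "sol t u v" shows "R u v = 0"
proof -
  have "A u v = 20 * t * (2 * u + v)" "Gf u v = 8 * t * Pf u v"
    using assms by (auto simp: sol_def Phi_def E_def)
  then show ?thesis by (simp add: R_def)
qed

lemma E_lt_t: assumes "t < t'" "0 < v" "v < x" shows "E t' x v < E t x v"
  using Pf_pos[OF assms(3,2)] assms(1) by (simp add: E_def)

lemma v_mono: assumes t: "T0 \<le> t" "t < t'" and s: "sol t u v" and s': "sol t' u' v'"
  shows "v' < v"
proof (rule ccontr)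
  assume "\<not> v' < v"
  then have vv: "v \<le> v'" by simp
  have t': "T0 \<le> t'" using t by simp
  have su: "0 < v" "v < u" "u < 1" "E t u v = 0" using s by (auto simp: sol_def)
  have cu: "c < u" using struct_sol(2)[OF t(1) s] .
  have v'c: "v' < c" using struct_sol(1)[OF t' s'] .
  have ge: "0 \<le> E t' u v'"
  proof (cases "u = u'")
    case True then show ?thesis using s' by (simp add: sol_def)
  next
    case False then show ?thesis using struct_sol(4)[OF t' s', of u] v'c cu su by auto
  qed
  have lt1: "E t' u v < 0" using E_lt_t[OF t(2) su(1,2)] su by simp
  show False
  proof (cases "v = v'")
    case True then show False using ge lt1 by simp
  next
    case False
    then have "v < v'" using vv by simp
    then have "E t' u v' < E t' u v"
      using su v'c cu struct_sol(3)[OF t' s'] by (intro E_decr_v[OF t']) auto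
    then show False using ge lt1 by simp
  qed
qed

lemma v_small: assumes "0 < \<eta>" shows "\<exists>T\<ge>T0. \<forall>t u v. T \<le> t \<longrightarrow> sol t u v \<longrightarrow> v < \<eta>"
proof -
  define e where "e = min \<eta> (c / 2)"
  have e: "0 < e" "e \<le> \<eta>" "e < c" using assms c_facts by (auto simp: e_def)
  have cg: "continuous_on {e..c} g" by (rule continuous_on_subset[OF cont_g]) (use e c_lt in auto)
  obtain m where m: "m \<in> {e..c}" "\<And>y. y \<in> {e..c} \<Longrightarrow> g y \<le> g m"
    using continuous_attains_sup[OF compact_Icc _ cg] e by auto
  define T where "T = max T0 (g m / (60 * e) + 1)"
  show ?thesis
  proof (rule exI[of _ T], intro conjI allI impI)
    show "T0 \<le> T" by (simp add: T_def)
    fix t u v assume tT: "T \<le> t" and s: "sol t u v"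
    have t0: "T0 \<le> t" using tT by (simp add: T_def)
    show "v < \<eta>"
    proof (rule ccontr)
      assume "\<not> v < \<eta>"
      then have ve: "e \<le> v" using e by simp
      have vc: "v < c" using struct_sol(1)[OF t0 s] .
      have hv: "0 < h t v" using struct_sol(3)[OF t0 s] .
      then have "60 * t * v < g v" by (simp add: h_def)
      moreover have "g v \<le> g m" using m(2)[of v] ve vc by simp
      moreover have "60 * t * e \<le> 60 * t * v" using ve t0 T0_pos by (intro mult_left_mono) auto
      ultimately have "60 * t * e < g m" by linarith
      then have "t < g m / (60 * e)" using e by (simp add: field_simps)
      then show False using tT by (simp add: T_def)
    qed
  qed
qed

lemma R_neg_ex: assumes eta: "0 < \<eta>" "\<eta> \<le> 1 - c"
  shows "\<exists>C\<ge>0. \<forall>u v. c \<le> u \<longrightarrow> u \<le> 1 - \<eta> \<longrightarrow> 0 < v \<longrightarrow> v \<le> c / 2 \<longrightarrow> C < f v \<longrightarrow> R u v < 0"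
proof -
  define s0 :: real where "s0 = 9 / 10"
  define \<kappa> where "\<kappa> = c * (19 / 100)"
  have \<kappa>: "0 < \<kappa>" "\<kappa> < c" "\<kappa> \<le> 1 - \<eta>" using c_facts eta by (auto simp: \<kappa>_def)
  have cg: "continuous_on {\<kappa>..1 - \<eta>} g" by (rule continuous_on_subset[OF cont_g]) (use \<kappa> eta in auto)
  obtain m where m: "m \<in> {\<kappa>..1 - \<eta>}" "\<And>y. y \<in> {\<kappa>..1 - \<eta>} \<Longrightarrow> g y \<le> g m"
    using continuous_attains_sup[OF compact_Icc _ cg] \<kappa> by auto
  define B where "B = max 0 (g m)"
  have B: "0 \<le> B" "\<And>y. \<kappa> \<le> y \<Longrightarrow> y \<le> 1 - \<eta> \<Longrightarrow> g y \<le> B"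
    using m(2) by (auto simp: B_def intro: le_max_iff_disj[THEN iffD2])
  define f1 where "f1 = f (1 - \<eta>)"
  define fk where "fk = f \<kappa>"
  define C where "C = (10 * B + 6 * \<bar>f1\<bar> + 14 * \<bar>fk\<bar>) / 3"
  have C0: "0 \<le> C" using B by (simp add: C_def)
  show ?thesis
  proof (rule exI[of _ C], intro conjI allI impI C0)
    fix u v assume u: "c \<le> u" "u \<le> 1 - \<eta>" and v: "0 < v" "v \<le> c / 2" and X: "C < f v"
    define X where "X = f v"
    define d where "d = u - v"
    have d: "c / 2 \<le> d" "d < u" "d \<le> 1" "0 < d" using u v c_facts eta by (auto simp: d_def)
    have uv: "0 < v" "v < u" "u < 1" using u v c_facts eta d by (auto simp: d_def)
    define p0 where "p0 = ps u v s0"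
    have p0e: "p0 = u - (81 / 100) * d" by (simp add: p0_def ps_def s0_def d_def power2_eq_square)
    have p0: "\<kappa> \<le> p0" "p0 \<le> 1 - \<eta>" "0 < p0"
    proof -
      have "(81 / 100) * d \<le> (81 / 100) * u" using d by simp
      then show "\<kappa> \<le> p0" using u by (simp add: p0e \<kappa>_def)
      show "p0 \<le> 1 - \<eta>" using u d by (simp add: p0e)
      then show "0 < p0" using \<open>\<kappa> \<le> p0\<close> \<kappa> by simp
    qed
    have Bb: "g (ps u v s) \<le> B" if s: "0 \<le> s" "s \<le> s0" for s
    proof -
      have "s\<^sup>2 \<le> s0\<^sup>2" using s by (intro power_mono) auto
      then have "s\<^sup>2 * d \<le> s0\<^sup>2 * d" using d by (intro mult_right_mono) auto
      then have "p0 \<le> ps u v s" by (simp add: p0_def ps_def d_def)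
      moreover have "ps u v s \<le> u" using ps_between[of v u s] s uv by (simp add: s0_def)
      ultimately show ?thesis using p0 u by (intro B(2)) auto
    qed
    have Ale: "A u v \<le> B + (f v - f p0) / (2 * s0 * (u - v))"
      unfolding p0_def by (rule A_le[OF uv]) (use B Bb in \<open>auto simp: s0_def\<close>)
    have f1p: "f1 \<le> f p0" unfolding f1_def using p0 eta by (intro f_mono) auto
    have Aup: "A u v \<le> B + (X - f1) / (2 * s0 * d)"
    proof -
      have "(f v - f p0) / (2 * s0 * d) \<le> (X - f1) / (2 * s0 * d)"
        using f1p d by (intro divide_right_mono) (auto simp: X_def s0_def)
      then show ?thesis using Ale by (simp add: d_def)
    qed
    have Gge: "sqrt (u - v) * s0 * (f v - f p0) \<le> Gf u v"
      unfolding p0_def by (rule G_ge[OF uv]) (auto simp: s0_def)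
    have fkp: "f p0 \<le> fk" unfolding fk_def using p0 \<kappa> eta by (intro f_mono) auto
    have Glo: "sqrt d * s0 * (X - fk) \<le> Gf u v"
    proof -
      have "sqrt d * s0 * (X - fk) \<le> sqrt d * s0 * (f v - f p0)"
        using fkp d by (intro mult_left_mono) (auto simp: X_def s0_def)
      then show ?thesis using Gge by (simp add: d_def)
    qed
    have P: "Pf u v = d * sqrt d * (2 * u + 3 * v)" by (simp add: Pf_def d_def)
    have Ppos: "0 < Pf u v" using uv by (intro Pf_pos) auto
    have w: "0 < 2 * u + v" using uv by simp
    have "R u v = 2 * A u v * Pf u v - 5 * Gf u v * (2 * u + v)" by (simp add: R_def)
    also have "\<dots> \<le> 2 * (B + (X - f1) / (2 * s0 * d)) * Pf u v - 5 * (sqrt d * s0 * (X - fk)) * (2 * u + v)"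
    proof -
      have a2: "2 * A u v \<le> 2 * (B + (X - f1) / (2 * s0 * d))" by (rule mult_left_mono[OF Aup]) simp
      have "2 * A u v * Pf u v \<le> 2 * (B + (X - f1) / (2 * s0 * d)) * Pf u v"
        using mult_right_mono[OF a2, of "Pf u v"] Ppos by simp
      moreover have "5 * (sqrt d * s0 * (X - fk)) * (2 * u + v) \<le> 5 * Gf u v * (2 * u + v)"
      proof -
        have g5: "5 * (sqrt d * s0 * (X - fk)) \<le> 5 * Gf u v" using Glo by linarith
        show ?thesis using mult_right_mono[OF g5, of "2 * u + v"] w by simp
      qed
      ultimately show ?thesis by linarith
    qed
    also have "\<dots> = sqrt d * (2 * B * d * (2 * u + 3 * v) + X * ((2 * u + 3 * v) * (10 / 9) - (9 / 2) * (2 * u + v))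
        - f1 * (2 * u + 3 * v) * (10 / 9) + (9 / 2) * fk * (2 * u + v))"
      unfolding P using d by (simp add: s0_def field_simps)
    also have "\<dots> < 0"
    proof -
      have q1: "2 * B * d * (2 * u + 3 * v) \<le> 2 * B * 1 * 5"
      proof -
        have "B * d \<le> B * 1" using B d by (intro mult_left_mono) auto
        moreover have "2 * u + 3 * v \<le> 5" "0 \<le> 2 * u + 3 * v" using uv by auto
        ultimately have "(B * d) * (2 * u + 3 * v) \<le> (B * 1) * 5" using B d by (intro mult_mono) auto
        then show ?thesis by simp
      qed
      have Xp: "0 \<le> X" using X C0 by (simp add: X_def)
      have q2: "X * ((2 * u + 3 * v) * (10 / 9) - (9 / 2) * (2 * u + v)) \<le> X * (- 3)"
      proof -
        have coef: "(2 * u + 3 * v) * (10 / 9) - (9 / 2) * (2 * u + v) \<le> - 3"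
          using u uv c_facts by (simp add: field_simps)
        show ?thesis by (rule mult_left_mono[OF coef Xp])
      qed
      have q3: "- f1 * (2 * u + 3 * v) * (10 / 9) \<le> \<bar>f1\<bar> * 5 * (10 / 9)"
      proof -
        have "- f1 * (2 * u + 3 * v) \<le> \<bar>f1\<bar> * 5"
        proof -
          have "- f1 * (2 * u + 3 * v) \<le> \<bar>f1\<bar> * (2 * u + 3 * v)" using uv by (intro mult_right_mono) auto
          moreover have "\<bar>f1\<bar> * (2 * u + 3 * v) \<le> \<bar>f1\<bar> * 5" using uv by (intro mult_left_mono) auto
          ultimately show ?thesis by linarith
        qed
        then show ?thesis by simp
      qed
      have q4: "(9 / 2) * fk * (2 * u + v) \<le> (9 / 2) * \<bar>fk\<bar> * 3"
      proof -
        have "fk * (2 * u + v) \<le> \<bar>fk\<bar> * (2 * u + v)" using uv by (intro mult_right_mono) auto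
        moreover have "\<bar>fk\<bar> * (2 * u + v) \<le> \<bar>fk\<bar> * 3" using uv by (intro mult_left_mono) auto
        ultimately show ?thesis by simp
      qed
      have "2 * B * d * (2 * u + 3 * v) + X * ((2 * u + 3 * v) * (10 / 9) - (9 / 2) * (2 * u + v))
        - f1 * (2 * u + 3 * v) * (10 / 9) + (9 / 2) * fk * (2 * u + v) < 0"
        using q1 q2 q3 q4 X by (simp add: C_def X_def)
      moreover have "0 < sqrt d" using d by simp
      ultimately show ?thesis by (simp add: mult_pos_neg)
    qed
    finally show "R u v < 0" .
  qed
qed

lemma u_big: assumes "0 < \<eta>" shows "\<exists>T\<ge>T0. \<forall>t u v. T \<le> t \<longrightarrow> sol t u v \<longrightarrow> 1 - \<eta> < u"
proof (cases "\<eta> \<le> 1 - c")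
  case False
  show ?thesis
  proof (rule exI[of _ T0], intro conjI allI impI)
    fix t u v assume "T0 \<le> t" "sol t u v"
    then have "c < u" by (rule struct_sol(2))
    then show "1 - \<eta> < u" using False by simp
  qed simp
next
  case True
  obtain C where C: "0 \<le> C" "\<And>u v. c \<le> u \<Longrightarrow> u \<le> 1 - \<eta> \<Longrightarrow> 0 < v \<Longrightarrow> v \<le> c / 2 \<Longrightarrow> C < f v \<Longrightarrow> R u v < 0"
    using R_neg_ex[OF assms True] by blast
  obtain a where a: "0 < a" "\<And>x. 0 < x \<Longrightarrow> x < a \<Longrightarrow> C < f x" using f_top[of C] by blast
  obtain T where T: "T0 \<le> T" "\<And>t u v. T \<le> t \<Longrightarrow> sol t u v \<Longrightarrow> v < min a (c / 2)"
    using v_small[of "min a (c / 2)"] a c_facts by auto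
  show ?thesis
  proof (rule exI[of _ T], intro conjI allI impI T(1))
    fix t u v assume tT: "T \<le> t" and s: "sol t u v"
    have t0: "T0 \<le> t" using tT T by simp
    have vv: "v < a" "v < c / 2" "0 < v" using T(2)[OF tT s] s by (auto simp: sol_def)
    show "1 - \<eta> < u"
    proof (rule ccontr)
      assume "\<not> 1 - \<eta> < u"
      then have "R u v < 0" using struct_sol(2)[OF t0 s] vv a(2)[of v] by (intro C(2)) auto
      then show False using sol_R[OF s] by simp
    qed
  qed
qed

end

lemma crossing:
  fixes F :: "real \<Rightarrow> real"
  assumes ab: "a \<le> b" and cF: "continuous_on {a..b} F" and Fb: "F b = 0"
    and zd: "\<And>w. a \<le> w \<Longrightarrow> w \<le> b \<Longrightarrow> F w = 0 \<Longrightarrow> \<exists>l>0. (F has_real_derivative l) (at w)"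
  shows "\<And>w. a \<le> w \<Longrightarrow> w < b \<Longrightarrow> F w < 0"
proof (rule ccontr)
  fix w1 assume w1: "a \<le> w1" "w1 < b" and nn: "\<not> F w1 < 0"
  obtain l where l: "0 < l" "(F has_real_derivative l) (at b)" using zd[of b] ab Fb by auto
  obtain d where d: "0 < d" "\<And>h. 0 < h \<Longrightarrow> h < d \<Longrightarrow> F (b - h) < F b"
    using DERIV_pos_inc_left[OF l(2) l(1)] by blast
  define h0 where "h0 = min (d / 2) ((b - w1) / 2)"
  have h0a: "h0 \<le> d / 2" unfolding h0_def by (rule min.cobounded1)
  have h0b: "h0 \<le> (b - w1) / 2" unfolding h0_def by (rule min.cobounded2)
  have h0c: "0 < h0" unfolding h0_def using d w1 by simp
  define b' where "b' = b - h0"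
  have b': "w1 < b'" "b' < b" "F b' < 0" using h0a h0b h0c d(2)[of h0] Fb w1 d by (auto simp: b'_def)
  define S where "S = {w \<in> {w1..b'}. 0 \<le> F w}"
  have cF': "continuous_on {w1..b'} F" by (rule continuous_on_subset[OF cF]) (use w1 b' in auto)
  have Sc: "closed S"
    unfolding S_def using continuous_on_closed_Collect_le[OF continuous_on_const cF' closed_atLeastAtMost, of 0]
    by simp
  have "w1 \<in> S" using nn w1 b' by (simp add: S_def)
  then have Sne: "S \<noteq> {}" by auto
  have Sb: "bdd_above S" by (auto simp: S_def bdd_above_def)
  define w2 where "w2 = Sup S"
  have w2S: "w2 \<in> S" unfolding w2_def by (rule closed_contains_Sup[OF Sne Sb Sc])
  have w2: "w1 \<le> w2" "w2 \<le> b'" "0 \<le> F w2" using w2S by (auto simp: S_def)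
  have above: "F w < 0" if "w2 < w" "w \<le> b'" for w
  proof (rule ccontr)
    assume "\<not> F w < 0"
    then have "w \<in> S" using that w2 by (auto simp: S_def)
    then have "w \<le> w2" unfolding w2_def by (rule cSup_upper[OF _ Sb])
    then show False using that by simp
  qed
  have w2b: "w2 < b'" using w2 b' by (cases "w2 = b'") auto
  have Fw2: "F w2 = 0"
  proof (rule ccontr)
    assume "F w2 \<noteq> 0"
    then have pos: "0 < F w2" using w2 by simp
    have "continuous_on {w2..b'} F" by (rule continuous_on_subset[OF cF']) (use w2 in auto)
    then obtain z where z: "w2 \<le> z" "z \<le> b'" "F z = 0"
      using IVT2'[of F b' 0 w2] pos b' w2b by auto
    then have "z \<noteq> w2" using pos by auto
    then show False using above[of z] z by simp
  qed
  obtain l2 where l2: "0 < l2" "(F has_real_derivative l2) (at w2)" using zd[of w2] w2 w1 b' Fw2 by auto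
  obtain d2 where d2: "0 < d2" "\<And>h. 0 < h \<Longrightarrow> h < d2 \<Longrightarrow> F w2 < F (w2 + h)"
    using DERIV_pos_inc_right[OF l2(2) l2(1)] by blast
  define h2 where "h2 = min (d2 / 2) ((b' - w2) / 2)"
  have h2a: "h2 \<le> d2 / 2" unfolding h2_def by (rule min.cobounded1)
  have h2b: "h2 \<le> (b' - w2) / 2" unfolding h2_def by (rule min.cobounded2)
  have h2c: "0 < h2" unfolding h2_def using d2 w2b by simp
  have "F w2 < F (w2 + h2)" using d2(2)[of h2] h2a h2c d2 by simp
  moreover have "F (w2 + h2) < 0" using above[of "w2 + h2"] h2b h2c w2b by simp
  ultimately show False using Fw2 by simp
qed

lemma alg_Rw:
  fixes x w r A g P G :: real
  assumes r: "0 < r" and w: "0 < w" and xr: "x = r\<^sup>2 + w"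
    and P: "P = r\<^sup>2 * r * (2 * x + 3 * w)" and G: "G = 2 * A * P / (5 * (2 * x + w))"
  shows "(2 * ((A - g) / (2 * (x - w))) * P + (- 15 / 2 * w * r) * (2 * A)) - ((5 * (- r * g)) * (2 * x + w) + 1 * (5 * G))
     = 2 * r * (4 * x + w) * (g - 3 * w * A / (2 * x + w))"
proof -
  define D where "D = 2 * x + w"
  have Dp: "0 < D" using r w xr by (simp add: D_def add_pos_pos)
  define q where "q = (A - g) / (2 * (x - w))"
  have d2: "x - w = r\<^sup>2" using xr by simp
  have Aq: "A = g + 2 * r\<^sup>2 * q" using r by (simp add: q_def d2 field_simps)
  have GD: "5 * G * D = 2 * A * P" using Dp by (simp add: G D_def field_simps)
  have AD: "(3 * w * A / D) * D = 3 * w * A" using Dp by simp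
  have key: "(2 * q * P + (- 15 / 2 * w * r) * (2 * A) - ((5 * (- r * g)) * D + 1 * (5 * G))) * D
      = (2 * r * (4 * x + w) * (g - 3 * w * A / D)) * D"
  proof -
    have "(2 * q * P + (- 15 / 2 * w * r) * (2 * A) - ((5 * (- r * g)) * D + 1 * (5 * G))) * D
        = 2 * q * P * D - 15 * w * r * A * D + 5 * r * g * D * D - 5 * G * D" by (simp add: algebra_simps)
    also have "\<dots> = 2 * q * P * D - 15 * w * r * A * D + 5 * r * g * D * D - 2 * A * P" using GD by simp
    also have "\<dots> = 2 * r * (4 * x + w) * (g * D - 3 * w * A)"
      unfolding Aq P D_def xr by (simp add: algebra_simps power2_eq_square power3_eq_cube)
    also have "\<dots> = (2 * r * (4 * x + w) * (g - 3 * w * A / D)) * D" using Dp by (simp add: algebra_simps)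
    finally show ?thesis .
  qed
  have "2 * q * P + (- 15 / 2 * w * r) * (2 * A) - ((5 * (- r * g)) * D + 1 * (5 * G))
      = 2 * r * (4 * x + w) * (g - 3 * w * A / D)"
    using key Dp by simp
  then show ?thesis by (simp add: q_def D_def)
qed
context ctx2 begin

lemma R_der_v: assumes "0 < w" "w < x" "x < 1" "R x w = 0"
  shows "((\<lambda>w. R x w) has_real_derivative 2 * sqrt (x - w) * (4 * x + w) * (g w - 3 * w * A x w / (2 * x + w))) (at w)"
proof -
  have Ad: "((\<lambda>w. A x w) has_real_derivative (A x w - g w) / (2 * (x - w))) (at w)"
    using assms by (intro A_der_v') auto
  have Pd: "((\<lambda>w. Pf x w) has_real_derivative - 15 / 2 * w * sqrt (x - w)) (at w)"
    using assms by (intro P_der_v) auto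
  have Gd: "((\<lambda>w. Gf x w) has_real_derivative - sqrt (x - w) * g w) (at w)"
    using assms by (intro G_der_v) auto
  have Ld: "((\<lambda>w. 2 * x + w) has_real_derivative 1) (at w)" by (auto intro!: derivative_eq_intros)
  define r where "r = sqrt (x - w)"
  have r: "0 < r" "x = r\<^sup>2 + w" using assms by (auto simp: r_def)
  have Pe: "Pf x w = r\<^sup>2 * r * (2 * x + 3 * w)" using assms by (simp add: Pf_def r_def)
  have w2: "0 < 2 * x + w" using assms by simp
  have Ge: "Gf x w = 2 * A x w * Pf x w / (5 * (2 * x + w))"
    using assms(4) w2 by (simp add: R_def field_simps)
  show ?thesis unfolding R_def
    by (rule DERIV_cong[OF DERIV_diff[OF DERIV_mult[OF DERIV_cmult[OF Ad] Pd] DERIV_mult[OF DERIV_cmult[OF Gd] Ld]]])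
       (unfold r_def[symmetric], rule alg_Rw[OF r(1) assms(1) r(2) Pe Ge])
qed

lemma tau_der: assumes "0 < v" "v < x" "x < 1"
  shows "((\<lambda>x. tau x v) has_real_derivative sqrt (x - v) * R x v / (16 * (Pf x v)\<^sup>2)) (at x)"
proof -
  have P0: "Pf x v \<noteq> 0" using Pf_pos[of v x] assms by simp
  have "((\<lambda>x. Gf x v / (8 * Pf x v)) has_real_derivative
      (sqrt (x - v) * A x v * (8 * Pf x v) - Gf x v * (8 * (5 / 2 * sqrt (x - v) * (2 * x + v)))) / ((8 * Pf x v) * (8 * Pf x v))) (at x)"
    using P0 by (intro DERIV_divide G_der_x[OF assms] DERIV_cmult P_der_x) (use assms in auto)
  moreover have "(sqrt (x - v) * A x v * (8 * Pf x v) - Gf x v * (8 * (5 / 2 * sqrt (x - v) * (2 * x + v)))) / ((8 * Pf x v) * (8 * Pf x v))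
      = sqrt (x - v) * R x v / (16 * (Pf x v)\<^sup>2)"
    using P0 by (simp add: R_def field_simps power2_eq_square)
  ultimately show ?thesis by (simp add: tau_def)
qed

end

context ctx2 begin

lemma cont_R_v: assumes "0 < a" "b < x" "x < 1" shows "continuous_on {a..b} (\<lambda>w. R x w)"
proof -
  have "isCont (\<lambda>w. R x w) w" if "a \<le> w" "w \<le> b" for w
  proof -
    have w: "0 < w" "w < x" "w < 1" using that assms by auto
    have "((\<lambda>w. A x w) has_real_derivative (A x w - g w) / (2 * (x - w))) (at w)"
      using w assms by (intro A_der_v') auto
    moreover have "((\<lambda>w. Pf x w) has_real_derivative - 15 / 2 * w * sqrt (x - w)) (at w)"
      using w by (intro P_der_v) auto
    moreover have "((\<lambda>w. Gf x w) has_real_derivative - sqrt (x - w) * g w) (at w)"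
      using w assms by (intro G_der_v) auto
    ultimately show ?thesis unfolding R_def
      by (intro continuous_intros DERIV_isCont) auto
  qed
  then show ?thesis by (intro continuous_at_imp_continuous_on) auto
qed

lemma u_mono_ex: "\<exists>T\<ge>T0. \<forall>t t' u v u' v'. T \<le> t \<longrightarrow> t < t' \<longrightarrow> sol t u v \<longrightarrow> sol t' u' v' \<longrightarrow> u < u'"
proof -
  obtain Tv where Tv: "T0 \<le> Tv" "\<And>t u v. Tv \<le> t \<Longrightarrow> sol t u v \<Longrightarrow> v < c / 2"
    using v_small[of "c / 2"] c_facts by auto
  define k0 where "k0 = (c / 2) * sqrt (c / 2) * (2 * c)"
  have k0: "0 < k0" using c_facts by (simp add: k0_def)
  define T where "T = max Tv (15 * T0 / k0 + 1)"
  show ?thesis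
  proof (rule exI[of _ T], intro conjI allI impI)
    show "T0 \<le> T" using Tv by (simp add: T_def)
    fix t t' u v u' v' assume tT: "T \<le> t" and tt: "t < t'" and s: "sol t u v" and s': "sol t' u' v'"
    have t0: "T0 \<le> t" "T0 \<le> t'" using tT tt Tv by (auto simp: T_def)
    have tk: "15 * T0 / k0 < t" using tT by (simp add: T_def)
    have vv: "v' < v" by (rule v_mono[OF t0(1) tt s s'])
    have vc: "v < c / 2" using Tv(2)[OF _ s] tT by (simp add: T_def)
    have su: "0 < v" "v < u" "u < 1" "Phi t u v = 0" "E t u v = 0" using s by (auto simp: sol_def)
    have su': "0 < v'" "v' < u'" "u' < 1" "Phi t' u' v' = 0" "E t' u' v' = 0" using s' by (auto simp: sol_def)
    have cu: "c < u" by (rule struct_sol(2)[OF t0(1) s])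
    have cu': "c < u'" by (rule struct_sol(2)[OF t0(2) s'])
    have Pk: "k0 \<le> Pf u v"
    proof -
      have d: "c / 2 \<le> u - v" using cu vc by simp
      have sd: "sqrt (c / 2) \<le> sqrt (u - v)" using d by (intro real_sqrt_le_mono)
      have "(c / 2) * sqrt (c / 2) \<le> (u - v) * sqrt (u - v)"
        using d sd c_facts by (intro mult_mono) auto
      moreover have "2 * c \<le> 2 * u + 3 * v" using cu su by simp
      ultimately have "(c / 2) * sqrt (c / 2) * (2 * c) \<le> (u - v) * sqrt (u - v) * (2 * u + 3 * v)"
        using c_facts su d by (intro mult_mono) auto
      then show ?thesis by (simp add: k0_def Pf_def)
    qed
    have Gt: "Gf u v = 8 * t * Pf u v" using su by (simp add: E_def)
    have fvu: "Gf u v \<le> f v - f u"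
    proof -
      have "0 \<le> f v - f u" using su f_mono[of v u] by simp
      moreover have "sqrt (u - v) \<le> 1" using su by simp
      ultimately have "sqrt (u - v) * (f v - f u) \<le> 1 * (f v - f u)" by (intro mult_right_mono)
      then show ?thesis using G_le[OF su(1,2,3)] by simp
    qed
    have big: "T0 \<le> (f v - f u) / 120"
    proof -
      have "8 * t * k0 \<le> 8 * t * Pf u v" using Pk t0 T0_pos by (intro mult_left_mono) auto
      then have "8 * t * k0 \<le> f v - f u" using Gt fvu by linarith
      moreover have "15 * T0 < t * k0" using tk k0 by (simp add: field_simps)
      ultimately show ?thesis by simp
    qed
    
    have Rneg: "R u v' < 0"
    proof -
      have cr: "\<And>w. v' \<le> w \<Longrightarrow> w < v \<Longrightarrow> R u w < 0"
      proof (rule crossing[of v' v "\<lambda>w. R u w"])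
        show "v' \<le> v" using vv by simp
        show "continuous_on {v'..v} (\<lambda>w. R u w)" using su su' by (intro cont_R_v) auto
        show "R u v = 0" by (rule sol_R[OF s])
      next
        fix w0 assume w0: "v' \<le> w0" "w0 \<le> v" "R u w0 = 0"
        have w0': "0 < w0" "w0 < u" using w0 su' su by auto
        define \<tau> where "\<tau> = A u w0 / (20 * (2 * u + w0))"
        have den: "0 < 2 * u + w0" using w0' by simp
        have Ag: "(f w0 - f u) / 2 \<le> A u w0"
        proof -
          have "0 \<le> f w0 - f u" using f_mono[of w0 u] w0' su by simp
          then have a1: "(f w0 - f u) / 2 \<le> (f w0 - f u) / (2 * (u - w0))"
            using w0' su by (intro divide_left_mono) auto
          have a2: "(f w0 - f u) / (2 * (u - w0)) \<le> A u w0" using A_ge[of w0 u] w0' su by simp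
          show ?thesis by (rule order_trans[OF a1 a2])
        qed
        have fw: "f v \<le> f w0" using f_mono[of w0 v] w0 w0' su by simp
        have tau0: "T0 \<le> \<tau>"
        proof -
          have "A u w0 / (20 * (2 * u + w0)) \<ge> A u w0 / 60"
          proof -
            have Ap: "0 \<le> A u w0" using Ag big T0_pos fw by simp
            have "20 * (2 * u + w0) \<le> 60" using su w0' by simp
            then show ?thesis using Ap den by (intro divide_left_mono) auto
          qed
          moreover have "T0 \<le> A u w0 / 60" using Ag big fw by simp
          ultimately have "T0 \<le> A u w0 / (20 * (2 * u + w0))" by linarith
          then show ?thesis by (simp only: \<tau>_def)
        qed
        have sol0: "sol \<tau> u w0"
        proof -
          have den2: "0 < 40 * u + 20 * w0" "20 * (2 * u + w0) \<noteq> 0" using den by auto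
          have "20 * \<tau> * (2 * u + w0) = A u w0"
            unfolding \<tau>_def using den2 by (simp add: field_simps)
          then have "Phi \<tau> u w0 = 0" by (simp add: Phi_def)
          moreover have "E \<tau> u w0 = 0"
            using w0(3) den2 by (simp add: E_def \<tau>_def R_def field_simps)
          ultimately show ?thesis using w0' su by (simp add: sol_def)
        qed
        have hp: "0 < h \<tau> w0" by (rule struct_sol(3)[OF tau0 sol0])
        have "60 * \<tau> * w0 = 3 * w0 * A u w0 / (2 * u + w0)" using den by (simp add: \<tau>_def field_simps)
        then have pos: "0 < g w0 - 3 * w0 * A u w0 / (2 * u + w0)" using hp by (simp add: h_def)
        have "((\<lambda>w. R u w) has_real_derivative 2 * sqrt (u - w0) * (4 * u + w0) * (g w0 - 3 * w0 * A u w0 / (2 * u + w0))) (at w0)"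
          using w0' su w0 by (intro R_der_v) auto
        moreover have "0 < 2 * sqrt (u - w0) * (4 * u + w0) * (g w0 - 3 * w0 * A u w0 / (2 * u + w0))"
          using pos w0' by simp
        ultimately show "\<exists>l>0. ((\<lambda>w. R u w) has_real_derivative l) (at w0)" by blast
      qed
      show ?thesis using cr[of v'] vv by simp
    qed
    
    show "u < u'"
    proof (rule ccontr)
      assume "\<not> u < u'"
      then have uu: "u' \<le> u" by simp
      show False
      proof (cases "u' = u")
        case True then show False using sol_R[OF s'] Rneg by simp
      next
        case False
        then have uu': "u' < u" using uu by simp
        have Ppos: "\<And>x. v' < x \<Longrightarrow> 0 < Pf x v'" using su' by (intro Pf_pos) auto
        have taud: "\<And>x. v' < x \<Longrightarrow> x < 1 \<Longrightarrow> ((\<lambda>x. tau x v') has_real_derivative sqrt (x - v') * R x v' / (16 * (Pf x v')\<^sup>2)) (at x)"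
          using su' by (intro tau_der) auto
        have ctau: "continuous_on {u'..u} (\<lambda>x. tau x v')"
        proof (intro continuous_at_imp_continuous_on ballI)
          fix x assume "x \<in> {u'..u}"
          then have "v' < x" "x < 1" using su su' by auto
          then show "isCont (\<lambda>x. tau x v') x" by (rule DERIV_isCont[OF taud])
        qed
        have tau_u': "tau u' v' = t'" using su' Ppos[of u'] by (simp add: tau_def E_def field_simps)
        have Eu: "0 \<le> E t' u v'" using struct_sol(4)[OF t0(2) s', of u] False su su' vv by auto
        have tau_u: "t' \<le> tau u v'" using Eu Ppos[of u] su vv by (simp add: tau_def E_def field_simps)
        have dneg: "sqrt (u - v') * R u v' / (16 * (Pf u v')\<^sup>2) < 0"
          using Rneg su vv Ppos[of u] by (simp add: divide_neg_pos mult_pos_neg)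
        obtain dd where dd: "0 < dd" "\<And>hh. 0 < hh \<Longrightarrow> hh < dd \<Longrightarrow> tau u v' < tau (u - hh) v'"
          using DERIV_neg_dec_left[OF taud[of u] dneg] su vv by auto
        define h1 where "h1 = min (dd / 2) ((u - u') / 2)"
        have h1a: "h1 \<le> dd / 2" unfolding h1_def by (rule min.cobounded1)
        have h1b: "h1 \<le> (u - u') / 2" unfolding h1_def by (rule min.cobounded2)
        have h1c: "0 < h1" unfolding h1_def using dd uu' by simp
        have x1: "u' \<le> u - h1" "u - h1 \<le> u" "tau u v' < tau (u - h1) v'"
          using h1a h1b h1c dd(2)[of h1] dd by auto
        obtain xs where xs: "xs \<in> {u'..u}" "\<And>y. y \<in> {u'..u} \<Longrightarrow> tau y v' \<le> tau xs v'"
          using continuous_attains_sup[OF compact_Icc _ ctau] uu' by auto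
        have txs: "tau (u - h1) v' \<le> tau xs v'" using xs(2)[of "u - h1"] x1 by simp
        have xs1: "xs \<noteq> u'" using txs x1 tau_u' tau_u by auto
        have xs2: "xs \<noteq> u" using txs x1 by auto
        have xsi: "u' < xs" "xs < u" using xs xs1 xs2 by auto
        have der0: "sqrt (xs - v') * R xs v' / (16 * (Pf xs v')\<^sup>2) = 0"
        proof (rule DERIV_local_max[OF taud[of xs], of "min (xs - u') (u - xs)"])
          show "v' < xs" using xsi su' by simp
          show "xs < 1" using xsi su by simp
          show "0 < min (xs - u') (u - xs)" using xsi by simp
          show "\<forall>y. \<bar>xs - y\<bar> < min (xs - u') (u - xs) \<longrightarrow> tau y v' \<le> tau xs v'"
            using xs(2) by (auto simp: abs_less_iff)
        qed
        have Rz: "R xs v' = 0" using der0 xsi su' Ppos[of xs] by simp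
        define ts where "ts = tau xs v'"
        have tst: "t' < ts" using txs x1 tau_u by (simp add: ts_def)
        have ts0: "T0 \<le> ts" using tst t0 by simp
        have Pxs: "0 < Pf xs v'" using Ppos xsi su' by simp
        have sols: "sol ts xs v'"
        proof -
          have w: "0 < 2 * xs + v'" using xsi su' by simp
          have "A xs v' = 20 * ts * (2 * xs + v')"
            using Rz Pxs w by (simp add: ts_def tau_def R_def field_simps)
          then have "Phi ts xs v' = 0" by (simp add: Phi_def)
          moreover have "E ts xs v' = 0" using Pxs by (simp add: E_def ts_def tau_def)
          ultimately show ?thesis using xsi su su' by (simp add: sol_def)
        qed
        have "0 < E ts u' v'" using struct_sol(4)[OF ts0 sols, of u'] su' xsi by auto
        moreover have "E ts u' v' = 8 * Pf u' v' * (t' - ts)"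
          using tau_u' Ppos[of u'] su' by (simp add: E_def tau_def field_simps)
        moreover have "8 * Pf u' v' * (t' - ts) < 0"
          using Ppos[of u'] su' tst by (simp add: mult_pos_neg)
        ultimately show False by simp
      qed
    qed
  qed
qed

end

lemma sub_lemma:
  fixes H :: "real \<Rightarrow> real"
  assumes H: "continuous_on {0<..<1} H" and x: "0 < x" "x < 1" and v: "0 < v" "v < 1"
  shows "integral {-1..1} (\<lambda>\<mu>. H ((1 + \<mu>) / 2 * x + (1 - \<mu>) / 2 * v) / sqrt (1 - \<mu>))
       = 2 * sqrt 2 * integral {0..1} (\<lambda>s. H (ps x v s))"
proof -
  define \<sigma> where "\<sigma> = (\<lambda>\<mu>::real. sqrt ((1 - \<mu>) / 2))"
  define \<sigma>' where "\<sigma>' = (\<lambda>\<mu>::real. - 1 / (4 * sqrt ((1 - \<mu>) / 2)))"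
  define K where "K = (\<lambda>s. H (ps x v s))"
  have cK: "continuous_on {0..1} K"
    unfolding K_def using cont_ps_s[OF H _ x v, of "\<lambda>s. 1"] by simp
  have sub: "\<sigma> ` {-1..1} \<subseteq> {0..1}"
  proof
    fix y assume "y \<in> \<sigma> ` {-1..1}"
    then obtain \<mu> where \<mu>: "\<mu> \<in> {-1..1}" "y = \<sigma> \<mu>" by auto
    have "0 \<le> (1 - \<mu>) / 2" "(1 - \<mu>) / 2 \<le> 1" using \<mu> by auto
    then show "y \<in> {0..1}" using \<mu> by (auto simp: \<sigma>_def)
  qed
  have c\<sigma>: "continuous_on {-1..1} \<sigma>" unfolding \<sigma>_def by (intro continuous_intros) auto
  have d\<sigma>: "(\<sigma> has_field_derivative \<sigma>' \<mu>) (at \<mu> within {-1..1})" if "\<mu> \<in> {-1..1} - {1}" for \<mu>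
  proof -
    have p: "0 < (1 - \<mu>) / 2" using that by auto
    have "((\<lambda>\<mu>. sqrt ((1 - \<mu>) / 2)) has_real_derivative inverse (sqrt ((1 - \<mu>) / 2)) / 2 * (- 1 / 2)) (at \<mu>)"
      by (rule DERIV_chain2[where f=sqrt and g="\<lambda>\<mu>. (1 - \<mu>) / 2", OF DERIV_real_sqrt[OF p]])
         (auto intro!: derivative_eq_intros)
    moreover have "inverse (sqrt ((1 - \<mu>) / 2)) / 2 * (- 1 / 2) = \<sigma>' \<mu>"
      by (simp add: \<sigma>'_def field_simps)
    ultimately show ?thesis unfolding \<sigma>_def by (simp add: has_field_derivative_at_within)
  qed
  have hs: "((\<lambda>\<mu>. \<sigma>' \<mu> *\<^sub>R K (\<sigma> \<mu>)) has_integral (integral {\<sigma> (-1)..\<sigma> 1} K - integral {\<sigma> 1..\<sigma> (-1)} K)) {-1..1}"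
    by (rule has_integral_substitution_general[of "{1}" "-1" 1 \<sigma> 0 1 K \<sigma>']) (use sub cK c\<sigma> d\<sigma> in auto)
  have s1: "\<sigma> (-1) = 1" "\<sigma> 1 = 0" by (auto simp: \<sigma>_def)
  have hs2: "((\<lambda>\<mu>. \<sigma>' \<mu> * K (\<sigma> \<mu>)) has_integral (- integral {0..1} K)) {-1..1}"
    using hs s1 by simp
  have hs3: "((\<lambda>\<mu>. (- 2 * sqrt 2) * (\<sigma>' \<mu> * K (\<sigma> \<mu>))) has_integral ((- 2 * sqrt 2) * (- integral {0..1} K))) {-1..1}"
    by (rule has_integral_mult_right[OF hs2])
  have eq: "(- 2 * sqrt 2) * (\<sigma>' \<mu> * K (\<sigma> \<mu>)) = H ((1 + \<mu>) / 2 * x + (1 - \<mu>) / 2 * v) / sqrt (1 - \<mu>)"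
    if "\<mu> \<in> {-1..1}" for \<mu>
  proof -
    have m: "0 \<le> (1 - \<mu>) / 2" using that by auto
    have ps_eq: "ps x v (\<sigma> \<mu>) = (1 + \<mu>) / 2 * x + (1 - \<mu>) / 2 * v"
      using m by (simp add: \<sigma>_def ps_def field_simps)
    show ?thesis
    proof (cases "\<mu> = 1")
      case True then show ?thesis by (simp add: \<sigma>'_def)
    next
      case False
      then have p: "0 < 1 - \<mu>" using that by auto
      have "sqrt ((1 - \<mu>) / 2) = sqrt (1 - \<mu>) / sqrt 2" by (simp add: real_sqrt_divide)
      then have e1: "\<sigma>' \<mu> = - sqrt 2 / (4 * sqrt (1 - \<mu>))" by (simp add: \<sigma>'_def)
      have s22: "sqrt 2 * sqrt 2 = (2::real)" by simp
      have "(- 2 * sqrt 2) * \<sigma>' \<mu> = (sqrt 2 * sqrt 2) / (2 * sqrt (1 - \<mu>))"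
        unfolding e1 using p by (simp add: field_simps)
      then have "(- 2 * sqrt 2) * \<sigma>' \<mu> = 1 / sqrt (1 - \<mu>)"
        unfolding s22 by simp
      then show ?thesis using ps_eq by (simp add: K_def mult.assoc[symmetric])
    qed
  qed
  have "((\<lambda>\<mu>. H ((1 + \<mu>) / 2 * x + (1 - \<mu>) / 2 * v) / sqrt (1 - \<mu>)) has_integral (2 * sqrt 2 * integral {0..1} K)) {-1..1}"
  proof (rule has_integral_eq[OF eq])
    show "((\<lambda>\<mu>. (- 2 * sqrt 2) * (\<sigma>' \<mu> * K (\<sigma> \<mu>))) has_integral 2 * sqrt 2 * integral {0..1} K) {-1..1}"
      using hs3 by simp
  qed
  then show ?thesis by (simp add: K_def integral_unique)
qed

lemma pt_in: fixes x v \<mu> :: real assumes "0 < x" "x < 1" "0 < v" "v < 1" "-1 \<le> \<mu>" "\<mu> \<le> 1"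
  shows "0 < (1 + \<mu>) / 2 * x + (1 - \<mu>) / 2 * v" "(1 + \<mu>) / 2 * x + (1 - \<mu>) / 2 * v < 1"
proof -
  define s where "s = sqrt ((1 - \<mu>) / 2)"
  have m: "0 \<le> (1 - \<mu>) / 2" "(1 - \<mu>) / 2 \<le> 1" using assms by auto
  have s: "0 \<le> s" "s \<le> 1" using m by (auto simp: s_def)
  have e: "ps x v s = (1 + \<mu>) / 2 * x + (1 - \<mu>) / 2 * v"
    using m by (simp add: s_def ps_def field_simps)
  show "0 < (1 + \<mu>) / 2 * x + (1 - \<mu>) / 2 * v" "(1 + \<mu>) / 2 * x + (1 - \<mu>) / 2 * v < 1"
    using ps_in[OF assms(1-4) s] e by auto
qed

context ctx2 begin

lemma deriv_f: "0 < u \<Longrightarrow> u < 1 \<Longrightarrow> deriv f u = - g u"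
  using f_der DERIV_imp_deriv by blast

lemma Hp_eq: "0 < u \<Longrightarrow> u < 1 \<Longrightarrow> Hp f t u = h t u"
  using deriv_f by (simp add: Hp_def h_def)

lemma Phi0_eq: assumes "0 < x" "x < 1" "0 < v" "v < 1"
  shows "Phi0 f t x v = Phi t x v"
proof -
  have "integral {-1..1} (\<lambda>\<mu>. Hp f t ((1 + \<mu>) / 2 * x + (1 - \<mu>) / 2 * v) / sqrt (1 - \<mu>))
      = integral {-1..1} (\<lambda>\<mu>. h t ((1 + \<mu>) / 2 * x + (1 - \<mu>) / 2 * v) / sqrt (1 - \<mu>))"
    by (rule integral_cong) (use pt_in[OF assms] Hp_eq in auto)
  also have "\<dots> = 2 * sqrt 2 * integral {0..1} (\<lambda>s. h t (ps x v s))"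
    by (rule sub_lemma[OF cont_h assms])
  finally show ?thesis using Phi_int[OF assms] by (simp add: Phi0_def)
qed

lemma E_eq: assumes "0 < v" "v < u" "u < 1"
  shows "integral {v..u} (\<lambda>\<xi>. Phi0 f t \<xi> v * sqrt (\<xi> - v)) = E t u v"
proof -
  have "integral {v..u} (\<lambda>\<xi>. Phi0 f t \<xi> v * sqrt (\<xi> - v)) = integral {v..u} (\<lambda>\<xi>. sqrt (\<xi> - v) * Phi t \<xi> v)"
    by (rule integral_cong) (use Phi0_eq assms in auto)
  also have "\<dots> = E t u v - E t v v"
  proof (rule integral_unique, rule fundamental_theorem_of_calculus_interior)
    show "v \<le> u" using assms by simp
    show "continuous_on {v..u} (\<lambda>x. E t x v)"
      by (rule continuous_on_subset[OF cont_E]) (use assms in auto)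
    fix x assume "x \<in> {v<..<u}"
    then show "((\<lambda>x. E t x v) has_vector_derivative sqrt (x - v) * Phi t x v) (at x)"
      using assms E_der_x[of v x t] by (auto simp: has_real_derivative_iff_has_vector_derivative[symmetric])
  qed
  finally show ?thesis by (simp add: E_diag)
qed

lemma solves_iff: "solves_system f t u1 u3 x \<longleftrightarrow> sol t u1 u3 \<and> x = 30 * t * u3\<^sup>2 + f u3"
proof
  assume s: "solves_system f t u1 u3 x"
  then have b: "0 < u3" "u3 < u1" "u1 < 1" by (auto simp: solves_system_def)
  show "sol t u1 u3 \<and> x = 30 * t * u3\<^sup>2 + f u3"
    using s Phi0_eq[of u1 u3 t] E_eq[OF b, of t] b by (auto simp: solves_system_def sol_def)
next
  assume s: "sol t u1 u3 \<and> x = 30 * t * u3\<^sup>2 + f u3"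
  then have b: "0 < u3" "u3 < u1" "u1 < 1" by (auto simp: sol_def)
  show "solves_system f t u1 u3 x"
    using s Phi0_eq[of u1 u3 t] E_eq[OF b, of t] b by (auto simp: solves_system_def sol_def)
qed

end


lemma ctx_inst:
  fixes u0 f :: "real \<Rightarrow> real" and \<delta>2 :: real
  assumes u0_decr: "\<And>x y. x < y \<Longrightarrow> u0 y < u0 x"
    and u0_range: "\<And>x. 0 < u0 x \<and> u0 x < 1"
    and f_inv: "\<And>u. 0 < u \<Longrightarrow> u < 1 \<Longrightarrow> u0 (f u) = u"
    and f_smooth: "smooth_real_on {0<..<1} f"
    and f'_neg: "\<And>u. 0 < u \<Longrightarrow> u < 1 \<Longrightarrow> deriv f u < 0"
    and f'''_ends: "\<exists>\<epsilon>>0. (\<forall>u. 0 < u \<and> u < \<epsilon> \<longrightarrow> (deriv ^^ 3) f u < 0)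
                         \<and> (\<forall>u. 1 - \<epsilon> < u \<and> u < 1 \<longrightarrow> (deriv ^^ 3) f u < 0)"
    and \<delta>2_pos: "\<delta>2 > 0"
    and \<delta>2_prop: "\<And>u. 0 < u \<Longrightarrow> u < \<delta>2 \<Longrightarrow> u < 1 \<Longrightarrow> deriv (deriv f) u > 0"
  shows "\<exists>e0 d2. ctx f (\<lambda>x. - deriv f x) (\<lambda>x. - deriv (deriv f) x) (\<lambda>x. - deriv (deriv (deriv f)) x) e0 d2"
proof -
  have sm: "\<And>n x. 0 < x \<Longrightarrow> x < 1 \<Longrightarrow> (deriv ^^ n) f differentiable (at x)"
    using f_smooth by (auto simp: smooth_real_on_def)
  have d0: "\<And>x. 0 < x \<Longrightarrow> x < 1 \<Longrightarrow> (f has_real_derivative deriv f x) (at x)"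
    using sm[of _ 0] by (simp add: DERIV_deriv_iff_real_differentiable)
  have d1: "\<And>x. 0 < x \<Longrightarrow> x < 1 \<Longrightarrow> (deriv f has_real_derivative deriv (deriv f) x) (at x)"
    using sm[of _ 1] by (simp add: DERIV_deriv_iff_real_differentiable)
  have d2: "\<And>x. 0 < x \<Longrightarrow> x < 1 \<Longrightarrow> (deriv (deriv f) has_real_derivative deriv (deriv (deriv f)) x) (at x)"
    using sm[of _ 2] by (simp add: DERIV_deriv_iff_real_differentiable numeral_2_eq_2)
  have d3: "\<And>x. 0 < x \<Longrightarrow> x < 1 \<Longrightarrow> isCont (deriv (deriv (deriv f))) x"
  proof -
    fix x :: real assume "0 < x" "x < 1"
    then have "(deriv ^^ 3) f differentiable (at x)" by (rule sm)
    then have "deriv (deriv (deriv f)) differentiable (at x)" by (simp add: numeral_3_eq_3)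
    then show "isCont (deriv (deriv (deriv f))) x" by (rule differentiable_imp_continuous_within)
  qed
  have f3: "\<And>u. (deriv ^^ 3) f u = deriv (deriv (deriv f)) u" by (simp add: numeral_3_eq_3)
  obtain \<epsilon> where \<epsilon>: "\<epsilon> > 0" "\<And>u. 0 < u \<Longrightarrow> u < \<epsilon> \<Longrightarrow> (deriv ^^ 3) f u < 0"
      "\<And>u. 1 - \<epsilon> < u \<Longrightarrow> u < 1 \<Longrightarrow> (deriv ^^ 3) f u < 0"
    using f'''_ends by blast
  define e0 where "e0 = min \<epsilon> (1/4)"
  define dd where "dd = min \<delta>2 (1/2)"
  have ftop: "\<exists>a>0. \<forall>x. 0 < x \<and> x < a \<longrightarrow> K < f x" for K
  proof (intro exI[of _ "u0 K"] conjI allI impI)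
    show "0 < u0 K" using u0_range by simp
    fix x assume x: "0 < x \<and> x < u0 K"
    then have x1: "x < 1" using u0_range[of K] by simp
    show "K < f x"
    proof (rule ccontr)
      assume "\<not> K < f x"
      then have "u0 K \<le> u0 (f x)" using u0_decr[of "f x" K] by (cases "f x = K") auto
      then show False using f_inv[of x] x x1 by simp
    qed
  qed
  have fbot: "\<exists>b<1. \<forall>x. b < x \<and> x < 1 \<longrightarrow> f x < K" for K
  proof (intro exI[of _ "u0 K"] conjI allI impI)
    show "u0 K < 1" using u0_range by simp
    fix x assume x: "u0 K < x \<and> x < 1"
    then have x0: "0 < x" using u0_range[of K] by simp
    show "f x < K"
    proof (rule ccontr)
      assume "\<not> f x < K"
      then have "u0 (f x) \<le> u0 K" using u0_decr[of K "f x"] by (cases "f x = K") auto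
      then show False using f_inv[of x] x x0 by simp
    qed
  qed
  have "ctx f (\<lambda>x. - deriv f x) (\<lambda>x. - deriv (deriv f) x) (\<lambda>x. - deriv (deriv (deriv f)) x) e0 dd"
  proof (unfold_locales)
    fix x :: real assume x: "0 < x" "x < 1"
    show "(f has_real_derivative - (- deriv f x)) (at x)" using d0[OF x] by simp
    show "((\<lambda>x. - deriv f x) has_real_derivative - deriv (deriv f) x) (at x)"
      using DERIV_minus[OF d1[OF x]] by simp
    show "((\<lambda>x. - deriv (deriv f) x) has_real_derivative - deriv (deriv (deriv f)) x) (at x)"
      using DERIV_minus[OF d2[OF x]] by simp
    show "isCont (\<lambda>x. - deriv (deriv (deriv f)) x) x"
      using continuous_minus[OF d3[OF x]] by simp
    show "0 < - deriv f x" using f'_neg[OF x] by simp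
  next
    show "0 < e0" "e0 \<le> 1/4" using \<epsilon> by (auto simp: e0_def)
  next
    fix x :: real assume "0 < x" "x < e0"
    then show "0 < - deriv (deriv (deriv f)) x" using \<epsilon>(2)[of x] f3 by (simp add: e0_def)
  next
    fix x :: real assume "1 - e0 < x" "x < 1"
    then show "0 < - deriv (deriv (deriv f)) x" using \<epsilon>(3)[of x] f3 by (simp add: e0_def)
  next
    show "0 < dd" "dd < 1" using \<delta>2_pos by (auto simp: dd_def)
  next
    fix x :: real assume "0 < x" "x < dd"
    then show "- deriv (deriv f) x < 0" using \<delta>2_prop[of x] by (simp add: dd_def)
  next
    show "\<And>K. \<exists>a>0. \<forall>x. 0 < x \<and> x < a \<longrightarrow> K < f x" by (rule ftop)
    show "\<And>K. \<exists>b<1. \<forall>x. b < x \<and> x < 1 \<longrightarrow> f x < K" by (rule fbot)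
  qed
  then show ?thesis by blast
qed

theorem theorem4p8:
  fixes u0 f :: "real \<Rightarrow> real" and \<delta> \<delta>2 :: real
  assumes u0_smooth: "smooth_real_on UNIV u0"
    and u0_decr: "\<And>x y. x < y \<Longrightarrow> u0 y < u0 x"
    and u0_range: "\<And>x. 0 < u0 x \<and> u0 x < 1"
    and u0_bot: "(u0 \<longlongrightarrow> 1) at_bot"
    and u0_top: "(u0 \<longlongrightarrow> 0) at_top"
    and f_inv: "\<And>u. 0 < u \<Longrightarrow> u < 1 \<Longrightarrow> u0 (f u) = u"
    and f_smooth: "smooth_real_on {0<..<1} f"
    and f'_neg: "\<And>u. 0 < u \<Longrightarrow> u < 1 \<Longrightarrow> deriv f u < 0"
    and f'''_ends: "\<exists>\<epsilon>>0. (\<forall>u. 0 < u \<and> u < \<epsilon> \<longrightarrow> (deriv ^^ 3) f u < 0)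
                         \<and> (\<forall>u. 1 - \<epsilon> < u \<and> u < 1 \<longrightarrow> (deriv ^^ 3) f u < 0)"
    and \<delta>_pos: "\<delta> > 0"
    and \<delta>_prop: "\<And>xi u1. 0 < xi \<Longrightarrow> xi < 1 \<Longrightarrow> 0 < u1 \<Longrightarrow> 1 - \<delta> < u1 \<Longrightarrow> u1 < 1 \<Longrightarrow>
                   deriv (deriv (\<lambda>\<xi>. F0 f \<xi> u1)) xi < 0"
    and \<delta>2_pos: "\<delta>2 > 0"
    and \<delta>2_prop: "\<And>u. 0 < u \<Longrightarrow> u < \<delta>2 \<Longrightarrow> u < 1 \<Longrightarrow> deriv (deriv f) u > 0"
  shows "\<exists>T>0. \<exists>u1p u3p xp :: real \<Rightarrow> real.
           (\<forall>t>T. solves_system f t (u1p t) (u3p t) (xp t) \<and>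
                  (\<forall>u1 u3 x. solves_system f t u1 u3 x \<longrightarrow>
                              u1 = u1p t \<and> u3 = u3p t \<and> x = xp t)) \<and>
           strict_mono_on {T<..} u1p \<and>
           strict_antimono_on {T<..} u3p \<and>
           (u1p \<longlongrightarrow> 1) at_top \<and>
           (u3p \<longlongrightarrow> 0) at_top \<and>
           (\<forall>t>T. 1 - \<delta> < u1p t \<and> u1p t < 1 \<and> 0 < u3p t \<and> u3p t < \<delta>2)"
proof -
  define g where "g = (\<lambda>x. - deriv f x)"
  define g1 where "g1 = (\<lambda>x. - deriv (deriv f) x)"
  define g2 where "g2 = (\<lambda>x. - deriv (deriv (deriv f)) x)"
  obtain e0 d2 where C: "ctx f g g1 g2 e0 d2"
    using ctx_inst[OF u0_decr u0_range f_inv f_smooth f'_neg f'''_ends \<delta>2_pos \<delta>2_prop]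
    unfolding g_def g1_def g2_def by blast
  interpret C: ctx f g g1 g2 e0 d2 by (rule C)
  obtain c where c: "1 - e0 / 2 \<le> c" "c < 1"
      "\<And>x v. c \<le> x \<Longrightarrow> x < 1 \<Longrightarrow> 0 < v \<Longrightarrow> v \<le> x \<Longrightarrow> 0 < C.A2 x v"
    using C.convex_const by blast
  have c0: "0 < c" using c C.e0 by simp
  obtain T0 where T0: "0 < T0" "\<And>t p. T0 \<le> t \<Longrightarrow> 0 < p \<Longrightarrow> p \<le> c \<Longrightarrow> g1 p < 60 * t"
      "\<And>t. T0 \<le> t \<Longrightarrow> g c < 60 * t * c"
    using C.T0_exists[OF c0 c(2)] by blast
  have C2: "ctx2 f g g1 g2 e0 d2 c T0"
    unfolding ctx2_def ctx2_axioms_def using C c T0 by blast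
  interpret D: ctx2 f g g1 g2 e0 d2 c T0 by (rule C2)
  obtain T1 where T1: "T0 \<le> T1" "\<And>t. T1 \<le> t \<Longrightarrow> \<exists>u v. D.sol t u v" using D.exist by blast
  obtain Tm where Tm: "T0 \<le> Tm"
      "\<And>t t' u v u' v'. Tm \<le> t \<Longrightarrow> t < t' \<Longrightarrow> D.sol t u v \<Longrightarrow> D.sol t' u' v' \<Longrightarrow> u < u'"
    using D.u_mono_ex by blast
  obtain Tv where Tv: "T0 \<le> Tv" "\<And>t u v. Tv \<le> t \<Longrightarrow> D.sol t u v \<Longrightarrow> v < \<delta>2"
    using D.v_small[OF \<delta>2_pos] by blast
  obtain Tu where Tu: "T0 \<le> Tu" "\<And>t u v. Tu \<le> t \<Longrightarrow> D.sol t u v \<Longrightarrow> 1 - \<delta> < u"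
    using D.u_big[OF \<delta>_pos] by blast
  define T where "T = max (max T1 Tm) (max Tv Tu)"
  have T: "0 < T" "T1 \<le> T" "Tm \<le> T" "Tv \<le> T" "Tu \<le> T" "T0 \<le> T" using T0 T1 by (auto simp: T_def)
  define P where "P = (\<lambda>t. SOME p. D.sol t (fst p) (snd p))"
  define U1 where "U1 = (\<lambda>t. fst (P t))"
  define U3 where "U3 = (\<lambda>t. snd (P t))"
  define X where "X = (\<lambda>t. 30 * t * (U3 t)\<^sup>2 + f (U3 t))"
  have solU: "D.sol t (U1 t) (U3 t)" if tt: "T \<le> t" for t
  proof -
    obtain u v where "D.sol t u v" using T1(2)[of t] tt T by auto
    then have "\<exists>p. D.sol t (fst p) (snd p)" by (intro exI[of _ "(u, v)"]) simp
    then show ?thesis unfolding U1_def U3_def P_def by (rule someI_ex)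
  qed
  show ?thesis
  proof (rule exI[of _ T], intro conjI, rule T(1), rule exI[of _ U1], rule exI[of _ U3], rule exI[of _ X], intro conjI)
    show "\<forall>t>T. solves_system f t (U1 t) (U3 t) (X t) \<and>
          (\<forall>u1 u3 x. solves_system f t u1 u3 x \<longrightarrow> u1 = U1 t \<and> u3 = U3 t \<and> x = X t)"
    proof (intro allI impI)
      fix t assume t: "T < t"
      have s1: "solves_system f t (U1 t) (U3 t) (X t)"
        using solU[of t] t by (simp add: D.solves_iff X_def)
      moreover have "\<forall>u1 u3 x. solves_system f t u1 u3 x \<longrightarrow> u1 = U1 t \<and> u3 = U3 t \<and> x = X t"
      proof (intro allI impI)
        fix u1 u3 x assume "solves_system f t u1 u3 x"
        then have s: "D.sol t u1 u3" "x = 30 * t * u3\<^sup>2 + f u3" by (auto simp: D.solves_iff)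
        have "u1 = U1 t \<and> u3 = U3 t" using D.uniq[OF _ s(1) solU[of t]] t T by auto
        then show "u1 = U1 t \<and> u3 = U3 t \<and> x = X t" using s(2) by (simp add: X_def)
      qed
      ultimately show "solves_system f t (U1 t) (U3 t) (X t) \<and>
          (\<forall>u1 u3 x. solves_system f t u1 u3 x \<longrightarrow> u1 = U1 t \<and> u3 = U3 t \<and> x = X t)" by blast
    qed
    show "strict_mono_on {T<..} U1"
      unfolding monotone_on_def
    proof (intro ballI impI)
      fix t t' assume "t \<in> {T<..}" "t' \<in> {T<..}" "t < t'"
      then show "U1 t < U1 t'" using Tm(2)[OF _ _ solU[of t] solU[of t']] T by auto
    qed
    show "strict_antimono_on {T<..} U3"
      unfolding monotone_on_def
    proof (intro ballI impI)
      fix t t' assume tt: "t \<in> {T<..}" "t' \<in> {T<..}" "t < t'"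
      then show "U3 t' < U3 t" using D.v_mono[OF _ _ solU[of t] solU[of t']] T by auto
    qed
    show "(U1 \<longlongrightarrow> 1) at_top"
    proof (rule tendstoI)
      fix e :: real assume e: "0 < e"
      obtain Te where Te: "T0 \<le> Te" "\<And>t u v. Te \<le> t \<Longrightarrow> D.sol t u v \<Longrightarrow> 1 - e < u"
        using D.u_big[OF e] by blast
      show "\<forall>\<^sub>F t in at_top. dist (U1 t) 1 < e"
        unfolding eventually_at_top_linorder
      proof (intro exI[of _ "max T Te"] allI impI)
        fix t assume "max T Te \<le> t"
        then have "1 - e < U1 t" "U1 t < 1" using Te(2)[OF _ solU[of t]] solU[of t] by (auto simp: D.sol_def)
        then show "dist (U1 t) 1 < e" by (simp add: dist_real_def)
      qed
    qed
    show "(U3 \<longlongrightarrow> 0) at_top"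
    proof (rule tendstoI)
      fix e :: real assume e: "0 < e"
      obtain Te where Te: "T0 \<le> Te" "\<And>t u v. Te \<le> t \<Longrightarrow> D.sol t u v \<Longrightarrow> v < e"
        using D.v_small[OF e] by blast
      show "\<forall>\<^sub>F t in at_top. dist (U3 t) 0 < e"
        unfolding eventually_at_top_linorder
      proof (intro exI[of _ "max T Te"] allI impI)
        fix t assume "max T Te \<le> t"
        then have "U3 t < e" "0 < U3 t" using Te(2)[OF _ solU[of t]] solU[of t] by (auto simp: D.sol_def)
        then show "dist (U3 t) 0 < e" by (simp add: dist_real_def)
      qed
    qed
    show "\<forall>t>T. 1 - \<delta> < U1 t \<and> U1 t < 1 \<and> 0 < U3 t \<and> U3 t < \<delta>2"
    proof (intro allI impI)
      fix t assume t: "T < t"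
      then have s: "D.sol t (U1 t) (U3 t)" using solU by simp
      have "1 - \<delta> < U1 t" using Tu(2)[OF _ s] t T by simp
      moreover have "U3 t < \<delta>2" using Tv(2)[OF _ s] t T by simp
      ultimately show "1 - \<delta> < U1 t \<and> U1 t < 1 \<and> 0 < U3 t \<and> U3 t < \<delta>2" using s by (auto simp: D.sol_def)
    qed
  qed
qed


end
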